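(* Let $D$ be a positive discriminant, $\tau\in\mathbb H\times\mathbb H$ and $n>2$ an integer. The following are equivalent: (1) $\tau$ is fixed by an element $A\in\operatorname{SL}(\Lambda_D)$ of order $n$; (2) there is an automorphism of the principally polarized abelian variety $B_\tau$ of order $n$ commuting with $\iota_\tau(\mathcal O_D)$; (3) $\iota_\tau:\mathcal O_D\to\operatorname{End}(B_\tau)$ extends to complex multiplication by an order containing $\mathcal O_D[\zeta_n]$, where $\zeta_n$ is a primitive $n$th root of unity.
   Context: $\mathcal O_D=\mathbb Z[\frac{D+\sqrt D}2]$, $K_D=\mathcal O_D\otimes\mathbb Q$, $\sigma_\pm:K_D\to\mathbb R$ the embeddings with $\sigma_+(\sqrt D)>0>\sigma_-(\sqrt D)$, $\mathcal O_D^\vee=\frac1{\sqrt D}\mathcal O_D$, $\Lambda_D=\mathcal O_D\oplus\mathcal O_D^\vee$ with symplectic form $\langle(x_1,y_1),(x_2,y_2)\rangle=\operatorname{Tr}(x_1y_2-x_2y_1)$. $\operatorname{SL}(\Lambda_D)$ is the group of matrices $\begin{pmatrix}a&b\\c&d\end{pmatrix}$ with $ad-bc=1$, $a,d\in\mathcal O_D$, $b\in\sqrt D\mathcal O_D$, $c\in\mathcal O_D^\vee$, acting on $\mathbb H\times\mathbb H$ by $(\tau_+,\tau_-)\mapsto\big(\frac{\sigma_+(d)\tau_++\sigma_+(b)}{\sigma_+(c)\tau_++\sigma_+(a)},\frac{\sigma_-(d)\tau_-+\sigma_-(b)}{\sigma_-(c)\tau_-+\sigma_-(a)}\big)$. For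 $\tau=(\tau_+,\tau_-)$, $\phi_\tau(x,y)=(\sigma_+(x+y\tau_+),\sigma_-(x+y\tau_-))$, $B_\tau=\mathbb C^2/\phi_\tau(\Lambda_D)$ principally polarized by the symplectic form on $\Lambda_D$, and $\iota_\tau(x)$ is the endomorphism induced by $\operatorname{diag}(\sigma_+(x),\sigma_-(x))$. Complex multiplication by an order $\mathcal O$ (in a totally imaginary quadratic extension of $K_D$) is a proper homomorphism $\mathcal O\to\operatorname{End}(B_\tau)$ under which complex conjugation corresponds to the Rosati (symplectic adjoint) involution. *)

theory Defs
  imports "HOL-Analysis.Analysis"
begin

text \<open>An element (a,b) :: rat \<times> rat stands for a + b sqrt D in K_D = Q(sqrt D).\<close>

type_synonym kd = "rat \<times> rat"

definition real_quadratic_disc :: "int \<Rightarrow> bool" where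
  "real_quadratic_disc D \<longleftrightarrow> D > 0 \<and> (D mod 4 = 0 \<or> D mod 4 = 1) \<and> (\<nexists>k::int. k * k = D)"

definition kadd :: "kd \<Rightarrow> kd \<Rightarrow> kd" where
  "kadd x y = (fst x + fst y, snd x + snd y)"

definition ksub :: "kd \<Rightarrow> kd \<Rightarrow> kd" where
  "ksub x y = (fst x - fst y, snd x - snd y)"

definition kmul :: "int \<Rightarrow> kd \<Rightarrow> kd \<Rightarrow> kd" where
  "kmul D x y = (fst x * fst y + of_int D * snd x * snd y, fst x * snd y + snd x * fst y)"

definition kone :: kd where "kone = (1, 0)"
definition kzero :: kd where "kzero = (0, 0)"
definition ksqrt :: kd where "ksqrt = (0, 1)"

definition sigp :: "int \<Rightarrow> kd \<Rightarrow> real" where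
  "sigp D x = real_of_rat (fst x) + real_of_rat (snd x) * sqrt (real_of_int D)"
definition sigm :: "int \<Rightarrow> kd \<Rightarrow> real" where
  "sigm D x = real_of_rat (fst x) - real_of_rat (snd x) * sqrt (real_of_int D)"

definition ktrace :: "kd \<Rightarrow> rat" where
  "ktrace x = 2 * fst x"

text \<open>O_D = Z[(D + sqrt D)/2]\<close>
definition OD :: "int \<Rightarrow> kd set" where
  "OD D = {(of_int m + of_int k * of_int D / 2, of_int k / 2) | m k :: int. True}"

text \<open>O_D^dual = (1/sqrt D) O_D\<close>
definition OD_dual :: "int \<Rightarrow> kd set" where
  "OD_dual D = {kmul D (0, 1 / of_int D) x | x. x \<in> OD D}"

definition sqrtD_OD :: "int \<Rightarrow> kd set" where
  "sqrtD_OD D = {kmul D ksqrt x | x. x \<in> OD D}"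

definition LambdaD :: "int \<Rightarrow> (kd \<times> kd) set" where
  "LambdaD D = OD D \<times> OD_dual D"

definition symp :: "int \<Rightarrow> kd \<times> kd \<Rightarrow> kd \<times> kd \<Rightarrow> rat" where
  "symp D u v = ktrace (ksub (kmul D (fst u) (snd v)) (kmul D (fst v) (snd u)))"

text \<open>A matrix (a,b,c,d) stands for [[a,b],[c,d]].\<close>
type_synonym kmat = "kd \<times> kd \<times> kd \<times> kd"

definition kmat_mult :: "int \<Rightarrow> kmat \<Rightarrow> kmat \<Rightarrow> kmat" where
  "kmat_mult D A B = (case A of (a, b, c, d) \<Rightarrow> case B of (a', b', c', d') \<Rightarrow>
     (kadd (kmul D a a') (kmul D b c'), kadd (kmul D a b') (kmul D b d'),
      kadd (kmul D c a') (kmul D d c'), kadd (kmul D c b') (kmul D d d')))"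

definition kmat_id :: kmat where "kmat_id = (kone, kzero, kzero, kone)"

primrec kmat_pow :: "int \<Rightarrow> kmat \<Rightarrow> nat \<Rightarrow> kmat" where
  "kmat_pow D A 0 = kmat_id"
| "kmat_pow D A (Suc k) = kmat_mult D A (kmat_pow D A k)"

definition kmat_order :: "int \<Rightarrow> kmat \<Rightarrow> nat \<Rightarrow> bool" where
  "kmat_order D A n \<longleftrightarrow> n > 0 \<and> kmat_pow D A n = kmat_id \<and>
     (\<forall>k. 0 < k \<and> k < n \<longrightarrow> kmat_pow D A k \<noteq> kmat_id)"

definition SL_Lambda :: "int \<Rightarrow> kmat set" where
  "SL_Lambda D = {(a, b, c, d). ksub (kmul D a d) (kmul D b c) = kone \<and>
     a \<in> OD D \<and> d \<in> OD D \<and> b \<in> sqrtD_OD D \<and> c \<in> OD_dual D}"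

definition sl_act :: "int \<Rightarrow> kmat \<Rightarrow> complex \<times> complex \<Rightarrow> complex \<times> complex" where
  "sl_act D A \<tau> = (case A of (a, b, c, d) \<Rightarrow>
     ((of_real (sigp D d) * fst \<tau> + of_real (sigp D b)) / (of_real (sigp D c) * fst \<tau> + of_real (sigp D a)),
      (of_real (sigm D d) * snd \<tau> + of_real (sigm D b)) / (of_real (sigm D c) * snd \<tau> + of_real (sigm D a))))"

text \<open>C-linear endomorphisms of C^2 are 2x2 complex matrices.\<close>
type_synonym cmat = "complex^2^2"

definition phi :: "int \<Rightarrow> complex \<times> complex \<Rightarrow> kd \<times> kd \<Rightarrow> complex^2" where
  "phi D \<tau> u = (\<chi> i. if i = 1
      then of_real (sigp D (fst u)) + of_real (sigp D (snd u)) * fst \<tau>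
      else of_real (sigm D (fst u)) + of_real (sigm D (snd u)) * snd \<tau>)"

definition lattice :: "int \<Rightarrow> complex \<times> complex \<Rightarrow> (complex^2) set" where
  "lattice D \<tau> = phi D \<tau> ` LambdaD D"

text \<open>Endomorphisms of B_tau = C^2 / phi_tau(Lambda_D): C-linear maps preserving the lattice.\<close>
definition is_end :: "int \<Rightarrow> complex \<times> complex \<Rightarrow> cmat \<Rightarrow> bool" where
  "is_end D \<tau> M \<longleftrightarrow> (\<forall>p \<in> lattice D \<tau>. M *v p \<in> lattice D \<tau>)"

definition iota :: "int \<Rightarrow> complex \<times> complex \<Rightarrow> kd \<Rightarrow> cmat" where
  "iota D \<tau> x = (\<chi> i j. if i = j then (if i = 1 then of_real (sigp D x) else of_real (sigm D x)) else 0)"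

text \<open>Automorphism of the principally polarized abelian variety: invertible endomorphism
  preserving the symplectic form (transported from Lambda_D to the lattice by phi_tau).\<close>
definition ppav_aut :: "int \<Rightarrow> complex \<times> complex \<Rightarrow> cmat \<Rightarrow> bool" where
  "ppav_aut D \<tau> M \<longleftrightarrow> is_end D \<tau> M \<and>
     (\<exists>N. is_end D \<tau> N \<and> M ** N = mat 1 \<and> N ** M = mat 1) \<and>
     (\<forall>u \<in> LambdaD D. \<forall>v \<in> LambdaD D. \<forall>u' \<in> LambdaD D. \<forall>v' \<in> LambdaD D.
        M *v phi D \<tau> u = phi D \<tau> u' \<longrightarrow> M *v phi D \<tau> v = phi D \<tau> v' \<longrightarrow>
        symp D u' v' = symp D u v)"

primrec cmat_pow :: "cmat \<Rightarrow> nat \<Rightarrow> cmat" where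
  "cmat_pow M 0 = mat 1"
| "cmat_pow M (Suc k) = M ** cmat_pow M k"

definition cmat_order :: "cmat \<Rightarrow> nat \<Rightarrow> bool" where
  "cmat_order M n \<longleftrightarrow> n > 0 \<and> cmat_pow M n = mat 1 \<and>
     (\<forall>k. 0 < k \<and> k < n \<longrightarrow> cmat_pow M k \<noteq> mat 1)"

text \<open>Number fields are realised as subfields of C (no loss: every number field embeds in C,
  and for a CM field complex conjugation restricts to the CM involution).\<close>
definition subfield_C :: "complex set \<Rightarrow> bool" where
  "subfield_C L \<longleftrightarrow> 0 \<in> L \<and> 1 \<in> L \<and> (\<forall>x \<in> L. \<forall>y \<in> L. x + y \<in> L \<and> x * y \<in> L) \<and>
     (\<forall>x \<in> L. - x \<in> L \<and> inverse x \<in> L)"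

definition kd_embedding :: "int \<Rightarrow> complex set \<Rightarrow> (kd \<Rightarrow> complex) \<Rightarrow> bool" where
  "kd_embedding D L j \<longleftrightarrow> (\<forall>x. j x \<in> L) \<and> j kone = 1 \<and>
     (\<forall>x y. j (kadd x y) = j x + j y \<and> j (kmul D x y) = j x * j y)"

definition totally_imaginary :: "complex set \<Rightarrow> bool" where
  "totally_imaginary L \<longleftrightarrow> (\<forall>f :: complex \<Rightarrow> complex.
     (f 1 = 1 \<and> (\<forall>x \<in> L. \<forall>y \<in> L. f (x + y) = f x + f y \<and> f (x * y) = f x * f y))
     \<longrightarrow> (\<exists>x \<in> L. f x \<notin> \<real>))"

definition CM_ext :: "int \<Rightarrow> complex set \<Rightarrow> (kd \<Rightarrow> complex) \<Rightarrow> bool" where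
  "CM_ext D L j \<longleftrightarrow> subfield_C L \<and> kd_embedding D L j \<and> totally_imaginary L \<and>
     (\<exists>w \<in> L. w \<notin> range j \<and> L = {j a + j b * w | a b. True})"

definition order_in :: "complex set \<Rightarrow> complex set \<Rightarrow> bool" where
  "order_in L Ord \<longleftrightarrow> Ord \<subseteq> L \<and> 1 \<in> Ord \<and>
     (\<forall>x \<in> Ord. \<forall>y \<in> Ord. x + y \<in> Ord \<and> x * y \<in> Ord \<and> - x \<in> Ord) \<and>
     (\<exists>S. finite S \<and> S \<subseteq> Ord \<and> Ord = {\<Sum>s\<in>S. of_int (c s) * s | c. True}) \<and>
     (\<forall>x \<in> L. \<exists>m::int. m > 0 \<and> of_int m * x \<in> Ord)"

text \<open>Complex multiplication by Ord: a proper ring homomorphism Ord -> End(B_tau) under which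
  complex conjugation corresponds to the Rosati involution (adjoint for the polarization).\<close>
definition CM_hom :: "int \<Rightarrow> complex \<times> complex \<Rightarrow> complex set \<Rightarrow> complex set \<Rightarrow> (complex \<Rightarrow> cmat) \<Rightarrow> bool" where
  "CM_hom D \<tau> L Ord \<rho> \<longleftrightarrow>
     \<rho> 1 = mat 1 \<and> (\<forall>x \<in> Ord. is_end D \<tau> (\<rho> x)) \<and>
     (\<forall>x \<in> Ord. \<forall>y \<in> Ord. \<rho> (x + y) = \<rho> x + \<rho> y \<and> \<rho> (x * y) = \<rho> x ** \<rho> y) \<and>
     \<comment> \<open>proper: does not extend to a larger order in L\<close>
     (\<forall>x \<in> L. \<forall>m::int. m > 0 \<longrightarrow> of_int m * x \<in> Ord \<longrightarrow>
        is_end D \<tau> ((1 / real_of_int m) *\<^sub>R \<rho> (of_int m * x)) \<longrightarrow> x \<in> Ord) \<and>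
     \<comment> \<open>complex conjugation = Rosati involution\<close>
     (\<forall>a \<in> Ord. cnj a \<in> Ord \<and>
        (\<forall>u \<in> LambdaD D. \<forall>v \<in> LambdaD D. \<forall>u' \<in> LambdaD D. \<forall>v' \<in> LambdaD D.
           \<rho> a *v phi D \<tau> u = phi D \<tau> u' \<longrightarrow> \<rho> (cnj a) *v phi D \<tau> v = phi D \<tau> v' \<longrightarrow>
           symp D u' v = symp D u v'))"

definition primitive_root :: "nat \<Rightarrow> complex \<Rightarrow> bool" where
  "primitive_root n z \<longleftrightarrow> z ^ n = 1 \<and> (\<forall>k. 0 < k \<and> k < n \<longrightarrow> z ^ k \<noteq> 1)"

definition CM_extends :: "int \<Rightarrow> complex \<times> complex \<Rightarrow> nat \<Rightarrow> bool" where
  "CM_extends D \<tau> n \<longleftrightarrow> (\<exists>L j Ord \<rho> \<zeta>. CM_ext D L j \<and> order_in L Ord \<and> CM_hom D \<tau> L Ord \<rho> \<and>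
     (\<forall>x \<in> OD D. j x \<in> Ord \<and> \<rho> (j x) = iota D \<tau> x) \<and>
     \<zeta> \<in> Ord \<and> primitive_root n \<zeta>)"

end

theory Submission
  imports Defs
begin


lemma sqrt_int_irrat:
  fixes D :: int and r :: rat
  assumes "\<nexists>k::int. k * k = D" "D \<ge> 0"
  shows "real_of_rat r \<noteq> sqrt (real_of_int D)"
proof
  assume h: "real_of_rat r = sqrt (real_of_int D)"
  hence "real_of_rat r * real_of_rat r = real_of_int D" using assms(2) by simp
  hence "real_of_rat (r*r) = real_of_rat (of_int D)" by (simp add: of_rat_mult)
  hence rr: "r * r = of_int D" by (simp only: of_rat_eq_iff)
  obtain p q where pq: "quotient_of r = (p, q)" by (cases "quotient_of r")
  have q0: "q > 0" using quotient_of_denom_pos[OF pq] .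
  have cop: "coprime p q" using quotient_of_coprime[OF pq] .
  have rdef: "r = of_int p / of_int q" using quotient_of_div[OF pq] .
  have "of_int p * of_int p = (of_int D * of_int q * of_int q :: rat)"
    using rr q0 unfolding rdef by (simp add: field_simps)
  hence "(of_int (p * p) :: rat) = of_int (D * q * q)" by simp
  hence e: "p * p = D * q * q" by (simp only: of_int_eq_iff)
  have d: "q dvd p * p" using e by simp
  have "coprime q (p*p)" using cop by (simp add: coprime_commute)
  hence "is_unit q" using coprime_common_divisor[of q "p*p" q] d by simp
  hence "q = 1" using q0 by simp
  thus False using e assms(1) by auto
qed

lemma re_im_unique:
  fixes w :: complex
  assumes "Im w \<noteq> 0" "of_real a + of_real b * w = of_real a' + of_real b' * w"
  shows "a = a' \<and> b = b'"
proof -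
  have "Im (of_real a + of_real b * w) = Im (of_real a' + of_real b' * w)" using assms(2) by simp
  hence "b * Im w = b' * Im w" by simp
  hence bb: "b = b'" using assms(1) by simp
  thus ?thesis using assms(2) by simp
qed
locale qd =
  fixes D :: int and \<tau> :: "complex \<times> complex"
  assumes disc: "real_quadratic_disc D"
    and Hp: "Im (fst \<tau>) > 0" and Hm: "Im (snd \<tau>) > 0"
begin

abbreviation "sp \<equiv> sigp D"
abbreviation "sm \<equiv> sigm D"
abbreviation "km \<equiv> kmul D"

lemma D_pos: "D > 0" using disc unfolding real_quadratic_disc_def by auto
lemma nonsq: "\<nexists>k::int. k * k = D" using disc unfolding real_quadratic_disc_def by auto
lemma D_mod: "D mod 4 = 0 \<or> D mod 4 = 1" using disc unfolding real_quadratic_disc_def by auto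

lemma sqD: "sqrt (real_of_int D) * sqrt (real_of_int D) = real_of_int D"
  using D_pos by simp

lemma sp_add[simp]: "sp (kadd x y) = sp x + sp y"
  by (simp add: sigp_def kadd_def of_rat_add algebra_simps)
lemma sm_add[simp]: "sm (kadd x y) = sm x + sm y"
  by (simp add: sigm_def kadd_def of_rat_add algebra_simps)
lemma sp_sub[simp]: "sp (ksub x y) = sp x - sp y"
  by (simp add: sigp_def ksub_def of_rat_diff algebra_simps)
lemma sm_sub[simp]: "sm (ksub x y) = sm x - sm y"
  by (simp add: sigm_def ksub_def of_rat_diff algebra_simps)
lemma sp_mul[simp]: "sp (km x y) = sp x * sp y"
proof -
  have "sp (km x y) = real_of_rat (fst x) * real_of_rat (fst y) + real_of_int D * real_of_rat (snd x) * real_of_rat (snd y)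
     + (real_of_rat (fst x) * real_of_rat (snd y) + real_of_rat (snd x) * real_of_rat (fst y)) * sqrt (real_of_int D)"
    by (simp add: sigp_def kmul_def of_rat_add of_rat_mult of_rat_of_int_eq)
  also have "\<dots> = sp x * sp y"
    using sqD by (simp add: sigp_def algebra_simps)
  finally show ?thesis .
qed
lemma sm_mul[simp]: "sm (km x y) = sm x * sm y"
proof -
  have "sm (km x y) = real_of_rat (fst x) * real_of_rat (fst y) + real_of_int D * real_of_rat (snd x) * real_of_rat (snd y)
     - (real_of_rat (fst x) * real_of_rat (snd y) + real_of_rat (snd x) * real_of_rat (fst y)) * sqrt (real_of_int D)"
    by (simp add: sigm_def kmul_def of_rat_add of_rat_mult of_rat_of_int_eq)
  also have "\<dots> = sm x * sm y"
    using sqD by (simp add: sigm_def algebra_simps)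
  finally show ?thesis .
qed
lemma sp_one[simp]: "sp kone = 1" by (simp add: sigp_def kone_def)
lemma sm_one[simp]: "sm kone = 1" by (simp add: sigm_def kone_def)
lemma sp_zero[simp]: "sp kzero = 0" by (simp add: sigp_def kzero_def)
lemma sm_zero[simp]: "sm kzero = 0" by (simp add: sigm_def kzero_def)
lemma sp_rat[simp]: "sp (r, 0) = real_of_rat r" by (simp add: sigp_def)
lemma sm_rat[simp]: "sm (r, 0) = real_of_rat r" by (simp add: sigm_def)

lemma sp_eq0: "sp x = 0 \<longleftrightarrow> x = kzero"
proof
  assume h: "sp x = 0"
  show "x = kzero"
  proof (cases "snd x = 0")
    case True thus ?thesis using h by (cases x) (simp add: sigp_def kzero_def)
  next
    case False
    have "sqrt (real_of_int D) = - real_of_rat (fst x) / real_of_rat (snd x)"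
      using h False by (simp add: sigp_def field_simps)
    hence "real_of_rat (- fst x / snd x) = sqrt (real_of_int D)"
      by (simp add: of_rat_divide of_rat_minus)
    thus ?thesis using sqrt_int_irrat[OF nonsq] D_pos by auto
  qed
qed simp

lemma sm_eq0: "sm x = 0 \<longleftrightarrow> x = kzero"
proof
  assume h: "sm x = 0"
  show "x = kzero"
  proof (cases "snd x = 0")
    case True thus ?thesis using h by (cases x) (simp add: sigm_def kzero_def)
  next
    case False
    have "sqrt (real_of_int D) = real_of_rat (fst x) / real_of_rat (snd x)"
      using h False by (simp add: sigm_def field_simps)
    hence "real_of_rat (fst x / snd x) = sqrt (real_of_int D)"
      by (simp add: of_rat_divide)
    thus ?thesis using sqrt_int_irrat[OF nonsq] D_pos by auto
  qed
qed simp

lemma ksub_eq0: "ksub x y = kzero \<longleftrightarrow> x = y"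
  by (cases x, cases y) (simp add: ksub_def kzero_def)

lemma sp_inj: "sp x = sp y \<longleftrightarrow> x = y"
  using sp_eq0[of "ksub x y"] by (simp add: ksub_eq0)
lemma sm_inj: "sm x = sm y \<longleftrightarrow> x = y"
  using sm_eq0[of "ksub x y"] by (simp add: ksub_eq0)


end

context qd begin
lemma e_ex: "\<exists>e::int. 4 * e = D * D - D"
proof -
  have "4 dvd D * D - D" using D_mod
  proof
    assume "D mod 4 = 0" then obtain q where "D = 4*q" by (metis dvd_def mod_eq_0_iff_dvd)
    thus ?thesis by (simp add: algebra_simps)
  next
    assume h: "D mod 4 = 1" then obtain q where "D = 4*q + 1" by (metis mod_div_mult_eq add.commute mult.commute)
    hence "D * D - D = 4 * (q * (4*q+1))" by (simp add: algebra_simps)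
    thus ?thesis by simp
  qed
  thus ?thesis by (metis dvd_def)
qed

definition ee where "ee = (SOME e::int. 4 * e = D * D - D)"
lemma ee: "4 * ee = D * D - D" unfolding ee_def using someI_ex[OF e_ex] .
lemma ee_rat: "(of_int ee :: rat) = (of_int D * of_int D - of_int D) / 4"
proof -
  have h: "(4::rat) * of_int ee = of_int D * of_int D - of_int D"
    by (metis ee of_int_diff of_int_mult of_int_numeral)
  have "(of_int ee :: rat) = (4 * of_int ee) / 4" by simp
  also have "\<dots> = (of_int D * of_int D - of_int D) / 4" by (simp only: h)
  finally show ?thesis .
qed

lemma D_rat_nz: "(of_int D :: rat) \<noteq> 0" using D_pos by simp

lemma OD_iff: "x \<in> OD D \<longleftrightarrow> (\<exists>m k::int. x = (of_int m + of_int k * of_int D / 2, of_int k / 2))"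
  unfolding OD_def by auto

lemma dual_iff: "y \<in> OD_dual D \<longleftrightarrow> (\<exists>m k::int. y = (of_int k / 2, of_int m / of_int D + of_int k / 2))"
proof
  assume "y \<in> OD_dual D"
  then obtain x where "y = kmul D (0, 1 / of_int D) x" "x \<in> OD D"
    unfolding OD_dual_def by auto
  then obtain m k :: int where "y = kmul D (0, 1 / of_int D) (of_int m + of_int k * of_int D / 2, of_int k / 2)"
    unfolding OD_iff by auto
  hence "y = (of_int k / 2, of_int m / of_int D + of_int k / 2)"
    using D_rat_nz by (simp add: kmul_def field_simps)
  thus "\<exists>m k::int. y = (of_int k / 2, of_int m / of_int D + of_int k / 2)" by blast
next
  assume "\<exists>m k::int. y = (of_int k / 2, of_int m / of_int D + of_int k / 2)"
  then obtain m k :: int where y: "y = (of_int k / 2, of_int m / of_int D + of_int k / 2)" by blast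
  have "y = kmul D (0, 1 / of_int D) (of_int m + of_int k * of_int D / 2, of_int k / 2)"
    using D_rat_nz y by (simp add: kmul_def field_simps)
  thus "y \<in> OD_dual D" unfolding OD_dual_def OD_def by blast
qed

lemma sq_iff: "b \<in> sqrtD_OD D \<longleftrightarrow> (\<exists>m k::int. b = (of_int D * of_int k / 2, of_int m + of_int k * of_int D / 2))"
proof
  assume "b \<in> sqrtD_OD D"
  then obtain x where "b = kmul D ksqrt x" "x \<in> OD D"
    unfolding sqrtD_OD_def by auto
  then obtain m k :: int where "b = kmul D ksqrt (of_int m + of_int k * of_int D / 2, of_int k / 2)"
    unfolding OD_iff by auto
  hence "b = (of_int D * of_int k / 2, of_int m + of_int k * of_int D / 2)"
    by (simp add: kmul_def ksqrt_def)
  thus "\<exists>m k::int. b = (of_int D * of_int k / 2, of_int m + of_int k * of_int D / 2)" by blast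
next
  assume "\<exists>m k::int. b = (of_int D * of_int k / 2, of_int m + of_int k * of_int D / 2)"
  then obtain m k :: int where y: "b = (of_int D * of_int k / 2, of_int m + of_int k * of_int D / 2)" by blast
  have "b = kmul D ksqrt (of_int m + of_int k * of_int D / 2, of_int k / 2)"
    using y by (simp add: kmul_def ksqrt_def)
  thus "b \<in> sqrtD_OD D" unfolding sqrtD_OD_def OD_def by blast
qed

lemma O_mul: assumes "x \<in> OD D" "y \<in> OD D" shows "km x y \<in> OD D"
proof -
  obtain m k m' k' :: int where x: "x = (of_int m + of_int k * of_int D / 2, of_int k / 2)"
    and y: "y = (of_int m' + of_int k' * of_int D / 2, of_int k' / 2)" using assms OD_iff by meson
  show ?thesis unfolding OD_iff
    apply (rule exI[of _ "m*m' - ee*k*k'"], rule exI[of _ "m*k' + k*m' + D*k*k'"])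
    unfolding x y kmul_def by (simp add: ee_rat field_simps ; simp add: algebra_simps)
qed

lemma O_dual_mul: assumes "x \<in> OD D" "y \<in> OD_dual D" shows "km x y \<in> OD_dual D"
proof -
  obtain m k m' k' :: int where x: "x = (of_int m + of_int k * of_int D / 2, of_int k / 2)"
    and y: "y = (of_int k' / 2, of_int m' / of_int D + of_int k' / 2)" using assms OD_iff dual_iff by meson
  show ?thesis unfolding dual_iff
    apply (rule exI[of _ "m*m' - ee*k*k'"], rule exI[of _ "m*k' + k*m' + D*k*k'"])
    using D_rat_nz unfolding x y kmul_def by (simp add: ee_rat field_simps ; simp add: algebra_simps)
qed

lemma sq_dual_mul: assumes "b \<in> sqrtD_OD D" "y \<in> OD_dual D" shows "km b y \<in> OD D"
proof -
  obtain m k m' k' :: int where x: "b = (of_int D * of_int k / 2, of_int m + of_int k * of_int D / 2)"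
    and y: "y = (of_int k' / 2, of_int m' / of_int D + of_int k' / 2)" using assms sq_iff dual_iff by meson
  show ?thesis unfolding OD_iff
    apply (rule exI[of _ "m*m' - ee*k*k'"], rule exI[of _ "k*m' + m*k' + D*k*k'"])
    using D_rat_nz unfolding x y kmul_def by (simp add: ee_rat field_simps ; simp add: algebra_simps)
qed

end


definition diag :: "complex \<Rightarrow> complex \<Rightarrow> cmat" where
  "diag z1 z2 = (\<chi> i j. if i = j then (if i = 1 then z1 else z2) else 0)"
definition vec2 :: "complex \<Rightarrow> complex \<Rightarrow> complex^2" where
  "vec2 w1 w2 = (\<chi> i. if i = 1 then w1 else w2)"

lemma two_ne_one[simp]: "(2::2) \<noteq> 1" by simp

lemma vec2_nth[simp]: "vec2 a b $ 1 = a" "vec2 a b $ 2 = b"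
  by (simp_all add: vec2_def)
lemma diag_nth[simp]: "diag a b $ 1 $ 1 = a" "diag a b $ 2 $ 2 = b" "diag a b $ 1 $ 2 = 0" "diag a b $ 2 $ 1 = 0"
  by (simp_all add: diag_def)

lemma vec2_eq_iff: "vec2 a b = vec2 c d \<longleftrightarrow> a = c \<and> b = d"
  by (auto simp: vec_eq_iff forall_2)
lemma diag_eq_iff: "diag a b = diag c d \<longleftrightarrow> a = c \<and> b = d"
  by (auto simp: vec_eq_iff forall_2)
lemma vec2_cases: "(v :: complex^2) = vec2 (v$1) (v$2)"
  by (simp add: vec_eq_iff forall_2)
lemma diag_mult: "diag a b ** diag c d = diag (a*c) (b*d)"
  by (simp add: vec_eq_iff forall_2 matrix_matrix_mult_def sum_2)
lemma diag_mv: "diag a b *v vec2 x y = vec2 (a*x) (b*y)"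
  by (simp add: vec_eq_iff forall_2 matrix_vector_mult_def sum_2)
lemma mat1_diag: "(mat 1 :: cmat) = diag 1 1"
  by (simp add: vec_eq_iff forall_2 mat_def)
lemma diag_plus: "diag a b + diag c d = diag (a+c) (b+d)"
  by (simp add: vec_eq_iff forall_2)
lemma diag_scaleR: "r *\<^sub>R diag a b = diag (r *\<^sub>R a) (r *\<^sub>R b)"
  by (simp add: vec_eq_iff forall_2)
lemma vec2_add: "vec2 a b + vec2 c d = vec2 (a+c) (b+d)"
  by (simp add: vec_eq_iff forall_2)
lemma cmat_pow_diag: "cmat_pow (diag a b) k = diag (a^k) (b^k)"
  by (induction k) (simp_all add: mat1_diag diag_mult)

lemma commute_diag:
  fixes M :: cmat
  assumes "M ** diag a b = diag a b ** M" "a \<noteq> b"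
  shows "M = diag (M$1$1) (M$2$2)"
proof -
  have "(M ** diag a b) $ 1 $ 2 = (diag a b ** M) $ 1 $ 2" "(M ** diag a b) $ 2 $ 1 = (diag a b ** M) $ 2 $ 1"
    using assms by simp_all
  hence "M$1$2 * b = a * M$1$2" "M$2$1 * a = b * M$2$1"
    by (simp_all add: matrix_matrix_mult_def sum_2)
  hence "M$1$2 = 0" "M$2$1 = 0" using assms(2)
    by (metis mult.commute mult_cancel_left)+
  thus ?thesis by (simp add: vec_eq_iff forall_2)
qed


context qd begin

lemma sp_eqI: "sp x = sp y \<Longrightarrow> x = y" using sp_inj by blast

lemma km_one[simp]: "km x kone = x" "km kone x = x"
  by (cases x; simp add: kmul_def kone_def)+
lemma km_zero[simp]: "km x kzero = kzero" "km kzero x = kzero"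
  by (cases x; simp add: kmul_def kzero_def)+
lemma kadd_zero[simp]: "kadd x kzero = x" "kadd kzero x = x"
  by (cases x; simp add: kadd_def kzero_def)+
lemma km_comm: "km x y = km y x" by (rule sp_eqI) simp

lemma O_add: assumes "x \<in> OD D" "y \<in> OD D" shows "kadd x y \<in> OD D"
proof -
  obtain m k m' k' :: int where x: "x = (of_int m + of_int k * of_int D / 2, of_int k / 2)" and y: "y = (of_int m' + of_int k' * of_int D / 2, of_int k' / 2)"
    using assms OD_iff by meson
  show ?thesis unfolding OD_iff x y kadd_def
    by (rule exI[of _ "m+m'"], rule exI[of _ "k+k'"]) (simp add: field_simps)
qed
lemma O_neg: "x \<in> OD D \<Longrightarrow> ksub kzero x \<in> OD D"
  unfolding OD_iff ksub_def kzero_def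
  apply (elim exE)
  subgoal for m k by (rule exI[of _ "-m"], rule exI[of _ "-k"]) (simp add: field_simps)
  done
lemma O_int: "(of_int i, 0) \<in> OD D"
  unfolding OD_iff by (rule exI[of _ i], rule exI[of _ 0]) simp
lemma O_one: "kone \<in> OD D" using O_int[of 1] by (simp add: kone_def)
lemma O_zero: "kzero \<in> OD D" using O_int[of 0] by (simp add: kzero_def)
lemma O_sqrt: "(0, 1) \<in> OD D"
  unfolding OD_iff by (rule exI[of _ "-D"], rule exI[of _ 2]) simp

lemma dual_add: assumes "x \<in> OD_dual D" "y \<in> OD_dual D" shows "kadd x y \<in> OD_dual D"
proof -
  obtain m k m' k' :: int where x: "x = (of_int k / 2, of_int m / of_int D + of_int k / 2)" and y: "y = (of_int k' / 2, of_int m' / of_int D + of_int k' / 2)"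
    using assms dual_iff by meson
  show ?thesis unfolding dual_iff x y kadd_def
    by (rule exI[of _ "m+m'"], rule exI[of _ "k+k'"]) (use D_rat_nz in \<open>simp add: field_simps\<close>)
qed
lemma dual_neg: "x \<in> OD_dual D \<Longrightarrow> ksub kzero x \<in> OD_dual D"
  unfolding dual_iff ksub_def kzero_def
  apply (elim exE)
  subgoal for m k by (rule exI[of _ "-m"], rule exI[of _ "-k"]) (simp add: field_simps)
  done
lemma dual_zero: "kzero \<in> OD_dual D"
  unfolding dual_iff kzero_def by (rule exI[of _ 0], rule exI[of _ 0]) simp
lemma dual_y0: "(0, 1 / of_int D) \<in> OD_dual D"
  unfolding dual_iff by (rule exI[of _ 1], rule exI[of _ 0]) simp
lemma dual_y1: "(1/2, 1/2) \<in> OD_dual D"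
  unfolding dual_iff by (rule exI[of _ 0], rule exI[of _ 1]) simp

lemma sq_add: assumes "x \<in> sqrtD_OD D" "y \<in> sqrtD_OD D" shows "kadd x y \<in> sqrtD_OD D"
proof -
  obtain m k m' k' :: int where x: "x = (of_int D * of_int k / 2, of_int m + of_int k * of_int D / 2)" and y: "y = (of_int D * of_int k' / 2, of_int m' + of_int k' * of_int D / 2)"
    using assms sq_iff by meson
  show ?thesis unfolding sq_iff x y kadd_def
    by (rule exI[of _ "m+m'"], rule exI[of _ "k+k'"]) (simp add: field_simps)
qed
lemma sq_neg: "x \<in> sqrtD_OD D \<Longrightarrow> ksub kzero x \<in> sqrtD_OD D"
  unfolding sq_iff ksub_def kzero_def
  apply (elim exE)
  subgoal for m k by (rule exI[of _ "-m"], rule exI[of _ "-k"]) (simp add: field_simps)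
  done
lemma sq_zero: "kzero \<in> sqrtD_OD D"
  unfolding sq_iff kzero_def by (rule exI[of _ 0], rule exI[of _ 0]) simp

definition mv :: "kmat \<Rightarrow> kd \<times> kd \<Rightarrow> kd \<times> kd" where
  "mv A u = (case A of (a, b, c, d) \<Rightarrow>
     (kadd (km a (fst u)) (km b (snd u)), kadd (km c (fst u)) (km d (snd u))))"

definition ent :: "kmat \<Rightarrow> bool" where
  "ent A \<longleftrightarrow> (case A of (a, b, c, d) \<Rightarrow> a \<in> OD D \<and> b \<in> sqrtD_OD D \<and> c \<in> OD_dual D \<and> d \<in> OD D)"

lemma mv_Lambda:
  assumes "ent A" "u \<in> LambdaD D" shows "mv A u \<in> LambdaD D"
proof -
  obtain a b c d where A: "A = (a,b,c,d)" by (cases A) auto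
  obtain x y where u: "u = (x,y)" by (cases u)
  have h: "a \<in> OD D" "b \<in> sqrtD_OD D" "c \<in> OD_dual D" "d \<in> OD D" "x \<in> OD D" "y \<in> OD_dual D"
    using assms unfolding A u ent_def LambdaD_def by auto
  have "km c x = km x c" by (rule km_comm)
  thus ?thesis unfolding A u mv_def LambdaD_def
    using h O_add O_mul sq_dual_mul dual_add O_dual_mul by auto
qed


lemma phi_eq: "phi D \<tau> u = vec2 (of_real (sp (fst u)) + of_real (sp (snd u)) * fst \<tau>)
                                (of_real (sm (fst u)) + of_real (sm (snd u)) * snd \<tau>)"
  by (simp add: phi_def vec2_def)
lemma iota_eq: "iota D \<tau> x = diag (of_real (sp x)) (of_real (sm x))"
  by (simp add: iota_def diag_def)

lemma cp_unique:
  assumes "of_real (sp x) + of_real (sp y) * fst \<tau> = of_real (sp x') + of_real (sp y') * fst \<tau>"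
  shows "x = x' \<and> y = y'"
  using re_im_unique[OF _ assms] Hp sp_inj by auto
lemma cm_unique:
  assumes "of_real (sm x) + of_real (sm y) * snd \<tau> = of_real (sm x') + of_real (sm y') * snd \<tau>"
  shows "x = x' \<and> y = y'"
  using re_im_unique[OF _ assms] Hm sm_inj by auto

lemma phi_inj: "phi D \<tau> u = phi D \<tau> v \<Longrightarrow> u = v"
  unfolding phi_eq vec2_eq_iff using cp_unique by (metis prod.collapse)

definition padd :: "kd \<times> kd \<Rightarrow> kd \<times> kd \<Rightarrow> kd \<times> kd" where
  "padd u v = (kadd (fst u) (fst v), kadd (snd u) (snd v))"

lemma phi_add: "phi D \<tau> u + phi D \<tau> v = phi D \<tau> (padd u v)"
  unfolding phi_eq vec2_add padd_def by (simp add: algebra_simps)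

lemma Lambda_add: "u \<in> LambdaD D \<Longrightarrow> v \<in> LambdaD D \<Longrightarrow> padd u v \<in> LambdaD D"
  unfolding LambdaD_def padd_def using O_add dual_add by auto

definition eqs :: "complex \<Rightarrow> complex \<Rightarrow> kmat \<Rightarrow> bool" where
  "eqs z1 z2 A \<longleftrightarrow> (case A of (a, b, c, d) \<Rightarrow>
     z1 = of_real (sp a) + of_real (sp c) * fst \<tau> \<and>
     z1 * fst \<tau> = of_real (sp b) + of_real (sp d) * fst \<tau> \<and>
     z2 = of_real (sm a) + of_real (sm c) * snd \<tau> \<and>
     z2 * snd \<tau> = of_real (sm b) + of_real (sm d) * snd \<tau>)"

lemma lin_aux:
  fixes z X Y t A B C E :: complex
  assumes "z = A + C * t" "z * t = B + E * t"
  shows "z * (X + Y * t) = (X * A + Y * B) + (X * C + Y * E) * t"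
proof -
  have "z * (X + Y * t) = X * z + Y * (z * t)" by (simp add: algebra_simps)
  also have "\<dots> = X * (A + C * t) + Y * (B + E * t)" using assms by simp
  finally show ?thesis by (simp add: algebra_simps)
qed

lemma diag_act:
  assumes "eqs z1 z2 A"
  shows "diag z1 z2 *v phi D \<tau> u = phi D \<tau> (mv A u)"
proof -
  obtain a b c d where A: "A = (a,b,c,d)" by (cases A) auto
  have e: "z1 = of_real (sp a) + of_real (sp c) * fst \<tau>"
     "z1 * fst \<tau> = of_real (sp b) + of_real (sp d) * fst \<tau>"
     "z2 = of_real (sm a) + of_real (sm c) * snd \<tau>"
     "z2 * snd \<tau> = of_real (sm b) + of_real (sm d) * snd \<tau>"
    using assms unfolding eqs_def A by auto
  show ?thesis unfolding phi_eq diag_mv vec2_eq_iff A mv_def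
    using lin_aux[OF e(1,2), of "of_real (sp (fst u))" "of_real (sp (snd u))"]
      lin_aux[OF e(3,4), of "of_real (sm (fst u))" "of_real (sm (snd u))"]
    by (simp add: algebra_simps)
qed

lemma y0_prop: "km ksqrt (0, 1 / of_int D) = kone"
  using D_rat_nz by (simp add: kmul_def ksqrt_def kone_def)

lemma end_diag:
  assumes "is_end D \<tau> (diag z1 z2)"
  shows "\<exists>A. ent A \<and> eqs z1 z2 A"
proof -
  let ?y0 = "(0::rat, 1 / of_int D)"
  have L1: "(kone, kzero) \<in> LambdaD D" unfolding LambdaD_def using O_one dual_zero by auto
  have L2: "(kzero, ?y0) \<in> LambdaD D" unfolding LambdaD_def using O_zero dual_y0 by auto
  have "diag z1 z2 *v phi D \<tau> (kone, kzero) \<in> lattice D \<tau>"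
    using assms L1 unfolding is_end_def lattice_def by auto
  then obtain a c where ac: "(a,c) \<in> LambdaD D" "diag z1 z2 *v phi D \<tau> (kone, kzero) = phi D \<tau> (a,c)"
    unfolding lattice_def by auto
  have "diag z1 z2 *v phi D \<tau> (kzero, ?y0) \<in> lattice D \<tau>"
    using assms L2 unfolding is_end_def lattice_def by auto
  then obtain b' d' where bd: "(b',d') \<in> LambdaD D" "diag z1 z2 *v phi D \<tau> (kzero, ?y0) = phi D \<tau> (b',d')"
    unfolding lattice_def by auto
  define b where "b = km ksqrt b'"
  define d where "d = km ksqrt d'"
  have a: "a \<in> OD D" and c: "c \<in> OD_dual D" and b': "b' \<in> OD D" and d': "d' \<in> OD_dual D"
    using ac(1) bd(1) unfolding LambdaD_def by auto
  have bsq: "b \<in> sqrtD_OD D" unfolding b_def sqrtD_OD_def using b' by blast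
  obtain x where x: "x \<in> OD D" "d' = km ?y0 x" using d' unfolding OD_dual_def by auto
  have s1: "sp ksqrt * sp ?y0 = 1" by (simp add: sp_mul[symmetric] y0_prop del: sp_mul)
  have "sp (km ksqrt (km ?y0 x)) = (sp ksqrt * sp ?y0) * sp x" by simp
  also have "\<dots> = sp x" using s1 by simp
  finally have "d = x" unfolding d_def x(2) by (rule sp_eqI)
  hence dO: "d \<in> OD D" using x by simp
  have s2: "sm ksqrt * sm ?y0 = 1" by (simp add: sm_mul[symmetric] y0_prop del: sm_mul)
  have e1: "vec2 z1 z2 = phi D \<tau> (a,c)" using ac(2) unfolding phi_eq diag_mv by (simp add: kone_def kzero_def)
  have e2: "vec2 (z1 * (of_real (sp ?y0) * fst \<tau>)) (z2 * (of_real (sm ?y0) * snd \<tau>)) = phi D \<tau> (b',d')"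
    using bd(2) unfolding phi_eq diag_mv by (simp add: kzero_def)
  have E1: "z1 = of_real (sp a) + of_real (sp c) * fst \<tau>" "z2 = of_real (sm a) + of_real (sm c) * snd \<tau>"
    using e1 unfolding phi_eq vec2_eq_iff by auto
  have E2': "z1 * (of_real (sp ?y0) * fst \<tau>) = of_real (sp b') + of_real (sp d') * fst \<tau>"
     "z2 * (of_real (sm ?y0) * snd \<tau>) = of_real (sm b') + of_real (sm d') * snd \<tau>"
    using e2 unfolding phi_eq vec2_eq_iff by auto
  have "z1 * fst \<tau> = of_real (sp ksqrt) * (z1 * (of_real (sp ?y0) * fst \<tau>))"
    using s1 by (simp add: algebra_simps) (metis mult.assoc mult.left_neutral of_real_1 of_real_mult)
  hence E2: "z1 * fst \<tau> = of_real (sp b) + of_real (sp d) * fst \<tau>"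
    unfolding E2'(1) b_def d_def by (simp add: algebra_simps)
  have "z2 * snd \<tau> = of_real (sm ksqrt) * (z2 * (of_real (sm ?y0) * snd \<tau>))"
    using s2 by (simp add: algebra_simps) (metis mult.assoc mult.left_neutral of_real_1 of_real_mult)
  hence E3: "z2 * snd \<tau> = of_real (sm b) + of_real (sm d) * snd \<tau>"
    unfolding E2'(2) b_def d_def by (simp add: algebra_simps)
  show ?thesis
    apply (rule exI[of _ "(a,b,c,d)"])
    unfolding ent_def eqs_def using a bsq c dO E1 E2 E3 by auto
qed

end

context qd begin

definition kdet :: "kmat \<Rightarrow> kd" where
  "kdet A = (case A of (a,b,c,d) \<Rightarrow> ksub (km a d) (km b c))"

lemma sp_neg[simp]: "sp (ksub kzero x) = - sp x" by simp
lemma sm_neg[simp]: "sm (ksub kzero x) = - sm x" by simp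

lemma pair_eqI: "sp (fst u) = sp (fst v) \<Longrightarrow> sp (snd u) = sp (snd v) \<Longrightarrow> u = v"
  using sp_inj by (metis prod.collapse)

lemma mv_mult: "mv (kmat_mult D A B) u = mv A (mv B u)"
proof -
  obtain a b c d where A: "A = (a,b,c,d)" by (cases A) auto
  obtain a' b' c' d' where B: "B = (a',b',c',d')" by (cases B) auto
  show ?thesis unfolding A B kmat_mult_def mv_def
    by (rule pair_eqI) (simp_all add: algebra_simps)
qed

lemma mv_id: "mv kmat_id u = u"
  unfolding kmat_id_def mv_def by (rule pair_eqI) simp_all

lemma kmat_eqI:
  assumes "\<And>u. mv A u = mv B u" shows "A = B"
proof -
  obtain a b c d where A: "A = (a,b,c,d)" by (cases A) auto
  obtain a' b' c' d' where B: "B = (a',b',c',d')" by (cases B) auto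
  have "mv A (kone, kzero) = mv B (kone, kzero)" "mv A (kzero, kone) = mv B (kzero, kone)" using assms by auto
  thus ?thesis unfolding A B mv_def by simp
qed

lemma mv_pow_act:
  assumes "eqs z1 z2 A"
  shows "cmat_pow (diag z1 z2) k *v phi D \<tau> u = phi D \<tau> (mv (kmat_pow D A k) u)"
proof (induction k arbitrary: u)
  case 0 thus ?case by (simp add: mv_id)
next
  case (Suc k)
  have "cmat_pow (diag z1 z2) (Suc k) *v phi D \<tau> u = diag z1 z2 *v (cmat_pow (diag z1 z2) k *v phi D \<tau> u)"
    by (simp add: matrix_vector_mul_assoc)
  also have "\<dots> = phi D \<tau> (mv A (mv (kmat_pow D A k) u))" using Suc diag_act[OF assms] by simp
  finally show ?case by (simp add: mv_mult)
qed

lemma phi_10: "phi D \<tau> (kone, kzero) = vec2 1 1"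
  unfolding phi_eq by simp

lemma order_equiv:
  assumes "eqs z1 z2 A"
  shows "cmat_pow (diag z1 z2) k = mat 1 \<longleftrightarrow> kmat_pow D A k = kmat_id"
proof
  assume h: "cmat_pow (diag z1 z2) k = mat 1"
  show "kmat_pow D A k = kmat_id"
  proof (rule kmat_eqI)
    fix u
    have "phi D \<tau> u = phi D \<tau> (mv (kmat_pow D A k) u)"
      using mv_pow_act[OF assms, of k u] h by simp
    thus "mv (kmat_pow D A k) u = mv kmat_id u" using phi_inj mv_id by metis
  qed
next
  assume h: "kmat_pow D A k = kmat_id"
  have "cmat_pow (diag z1 z2) k *v vec2 1 1 = vec2 1 1"
    using mv_pow_act[OF assms, of k "(kone,kzero)"] h by (simp add: mv_id phi_10)
  hence "z1 ^ k = 1 \<and> z2 ^ k = 1" by (simp add: cmat_pow_diag diag_mv vec2_eq_iff)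
  thus "cmat_pow (diag z1 z2) k = mat 1" by (simp add: cmat_pow_diag mat1_diag)
qed

lemma order_equiv2:
  assumes "eqs z1 z2 A"
  shows "cmat_order (diag z1 z2) n \<longleftrightarrow> kmat_order D A n"
  unfolding cmat_order_def kmat_order_def using order_equiv[OF assms] by simp

lemma ktrace_eq: "x = y \<Longrightarrow> ktrace x = ktrace y" by simp

lemma symp_det:
  "symp D (mv A u) (mv A v) = ktrace (km (kdet A) (ksub (km (fst u) (snd v)) (km (fst v) (snd u))))"
proof -
  obtain a b c d where A: "A = (a,b,c,d)" by (cases A) auto
  show ?thesis unfolding symp_def A mv_def kdet_def
    by (rule ktrace_eq, rule sp_eqI) (simp add: algebra_simps)
qed

lemma symp_adj:
  "symp D (mv (a,b,c,d) u) v = symp D u (mv (d, ksub kzero b, ksub kzero c, a) v)"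
  unfolding symp_def mv_def
  by (rule ktrace_eq, rule sp_eqI) (simp add: algebra_simps)

lemma inv_aux:
  fixes z A B C E t :: complex
  assumes "z = A + C * t" "z * t = B + E * t" "A * E - B * C = 1"
  shows "z * (E - C * t) = 1" "z * (A * t - B) = t"
proof -
  have "z * (E - C * t) = E * z - C * (z * t)" by (simp add: algebra_simps)
  also have "\<dots> = E * (A + C * t) - C * (B + E * t)" using assms by simp
  also have "\<dots> = A * E - B * C" by (simp add: algebra_simps)
  finally show "z * (E - C * t) = 1" using assms(3) by simp
  have "z * (A * t - B) = A * (z * t) - B * z" by (simp add: algebra_simps)
  also have "\<dots> = A * (B + E * t) - B * (A + C * t)" using assms by simp
  also have "\<dots> = (A * E - B * C) * t" by (simp add: algebra_simps)
  finally show "z * (A * t - B) = t" using assms(3) by simp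
qed

lemma SL_ent: "A \<in> SL_Lambda D \<Longrightarrow> ent A \<and> kdet A = kone"
  unfolding SL_Lambda_def ent_def kdet_def by auto

lemma SL_iff: "A \<in> SL_Lambda D \<longleftrightarrow> ent A \<and> kdet A = kone"
  unfolding SL_Lambda_def ent_def kdet_def by (cases A) auto

lemma end_of_ent:
  assumes "ent A" "eqs z1 z2 A" shows "is_end D \<tau> (diag z1 z2)"
  unfolding is_end_def lattice_def
proof
  fix p assume "p \<in> phi D \<tau> ` LambdaD D"
  then obtain u where u: "u \<in> LambdaD D" "p = phi D \<tau> u" by auto
  have "diag z1 z2 *v p = phi D \<tau> (mv A u)" using u diag_act[OF assms(2)] by simp
  thus "diag z1 z2 *v p \<in> phi D \<tau> ` LambdaD D" using mv_Lambda[OF assms(1) u(1)] by auto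
qed

end

context qd begin

lemma kone_ne_kzero: "kone \<noteq> kzero" by (simp add: kone_def kzero_def)
lemma ksub_zero[simp]: "ksub x kzero = x" by (cases x) (simp add: ksub_def kzero_def)

lemma det_sp: "A = (a,b,c,d) \<Longrightarrow> kdet A = kone \<Longrightarrow> sp a * sp d - sp b * sp c = 1"
  using sp_one unfolding kdet_def by (metis case_prod_conv sp_mul sp_sub)
lemma det_sm: "A = (a,b,c,d) \<Longrightarrow> kdet A = kone \<Longrightarrow> sm a * sm d - sm b * sm c = 1"
  using sm_one unfolding kdet_def by (metis case_prod_conv sm_mul sm_sub)

lemma alpha_nz:
  assumes "A = (a,b,c,d)" "kdet A = kone"
  shows "(of_real (sp a) + of_real (sp c) * fst \<tau> :: complex) \<noteq> 0"
proof
  assume h: "(of_real (sp a) + of_real (sp c) * fst \<tau> :: complex) = 0"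
  hence "Im (of_real (sp a) + of_real (sp c) * fst \<tau>) = 0" by simp
  hence "sp c * Im (fst \<tau>) = 0" by simp
  hence "sp c = 0" using Hp by simp
  hence "sp a = 0" using h by simp
  have "sp a * sp d - sp b * sp c = 1" using det_sp[OF assms] .
  thus False using \<open>sp a = 0\<close> \<open>sp c = 0\<close> by simp
qed

lemma beta_nz:
  assumes "A = (a,b,c,d)" "kdet A = kone"
  shows "(of_real (sm a) + of_real (sm c) * snd \<tau> :: complex) \<noteq> 0"
proof
  assume h: "(of_real (sm a) + of_real (sm c) * snd \<tau> :: complex) = 0"
  hence "Im (of_real (sm a) + of_real (sm c) * snd \<tau>) = 0" by simp
  hence "sm c * Im (snd \<tau>) = 0" by simp
  hence "sm c = 0" using Hm by simp
  hence "sm a = 0" using h by simp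
  have "sm a * sm d - sm b * sm c = 1" using det_sm[OF assms] .
  thus False using \<open>sm a = 0\<close> \<open>sm c = 0\<close> by simp
qed

lemma fix_iff:
  assumes "A = (a,b,c,d)" "kdet A = kone"
  shows "sl_act D A \<tau> = \<tau> \<longleftrightarrow>
    eqs (of_real (sp a) + of_real (sp c) * fst \<tau>) (of_real (sm a) + of_real (sm c) * snd \<tau>) A"
proof -
  let ?al = "(of_real (sp a) + of_real (sp c) * fst \<tau> :: complex)"
  let ?be = "(of_real (sm a) + of_real (sm c) * snd \<tau> :: complex)"
  have an: "?al \<noteq> 0" using alpha_nz[OF assms] .
  have bn: "?be \<noteq> 0" using beta_nz[OF assms] .
  have d1: "of_real (sp c) * fst \<tau> + of_real (sp a) = ?al" by simp
  have d2: "of_real (sm c) * snd \<tau> + of_real (sm a) = ?be" by simp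
  have "sl_act D A \<tau> = \<tau> \<longleftrightarrow>
     ((of_real (sp d) * fst \<tau> + of_real (sp b)) / ?al = fst \<tau> \<and>
      (of_real (sm d) * snd \<tau> + of_real (sm b)) / ?be = snd \<tau>)"
    unfolding sl_act_def assms(1) by (cases \<tau>) (auto simp: add.commute)
  also have "\<dots> \<longleftrightarrow> (?al * fst \<tau> = of_real (sp b) + of_real (sp d) * fst \<tau> \<and>
      ?be * snd \<tau> = of_real (sm b) + of_real (sm d) * snd \<tau>)"
    using an bn by (auto simp: divide_eq_eq algebra_simps)
  finally show ?thesis unfolding eqs_def assms(1) by auto
qed

lemma diag_commute: "diag a b ** diag c d = diag c d ** diag a b"
  by (simp add: diag_mult mult.commute)

lemma one_two:
  assumes A: "A \<in> SL_Lambda D" "kmat_order D A n" "sl_act D A \<tau> = \<tau>"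
  shows "\<exists>M. ppav_aut D \<tau> M \<and> cmat_order M n \<and> (\<forall>x \<in> OD D. M ** iota D \<tau> x = iota D \<tau> x ** M)"
proof -
  obtain a b c d where Ad: "A = (a,b,c,d)" by (cases A) auto
  have ent: "ent A" and det: "kdet A = kone" using SL_ent[OF A(1)] by auto
  define al where "al = (of_real (sp a) + of_real (sp c) * fst \<tau> :: complex)"
  define be where "be = (of_real (sm a) + of_real (sm c) * snd \<tau> :: complex)"
  have E: "eqs al be A" using fix_iff[OF Ad det] A(3) unfolding al_def be_def by simp
  have an: "al \<noteq> 0" using alpha_nz[OF Ad det] unfolding al_def .
  have bn: "be \<noteq> 0" using beta_nz[OF Ad det] unfolding be_def .
  define A' where "A' = (d, ksub kzero b, ksub kzero c, a)"
  have ent': "ent A'" using ent unfolding A'_def Ad ent_def using sq_neg dual_neg by auto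
  have e: "al = of_real (sp a) + of_real (sp c) * fst \<tau>" "al * fst \<tau> = of_real (sp b) + of_real (sp d) * fst \<tau>"
     "be = of_real (sm a) + of_real (sm c) * snd \<tau>" "be * snd \<tau> = of_real (sm b) + of_real (sm d) * snd \<tau>"
    using E unfolding eqs_def Ad by auto
  have dp: "of_real (sp a) * of_real (sp d) - of_real (sp b) * of_real (sp c) = (1::complex)"
    using det_sp[OF Ad det] by (metis of_real_1 of_real_diff of_real_mult)
  have dm: "of_real (sm a) * of_real (sm d) - of_real (sm b) * of_real (sm c) = (1::complex)"
    using det_sm[OF Ad det] by (metis of_real_1 of_real_diff of_real_mult)
  note i1 = inv_aux[OF e(1,2) dp] and i2 = inv_aux[OF e(3,4) dm]
  have E': "eqs (1/al) (1/be) A'"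
    unfolding eqs_def A'_def using i1 i2 an bn
    by (simp add: field_simps ; simp add: algebra_simps)
  let ?M = "diag al be"
  have endM: "is_end D \<tau> ?M" by (rule end_of_ent[OF ent E])
  have endN: "is_end D \<tau> (diag (1/al) (1/be))" by (rule end_of_ent[OF ent' E'])
  have MN: "?M ** diag (1/al) (1/be) = mat 1" "diag (1/al) (1/be) ** ?M = mat 1"
    using an bn by (simp_all add: diag_mult mat1_diag)
  have symp: "symp D u' v' = symp D u v"
    if "u \<in> LambdaD D" "v \<in> LambdaD D" "?M *v phi D \<tau> u = phi D \<tau> u'" "?M *v phi D \<tau> v = phi D \<tau> v'"
    for u v u' v'
  proof -
    have "u' = mv A u" "v' = mv A v" using that diag_act[OF E] phi_inj by metis+
    moreover have "symp D (mv A u) (mv A v) = symp D u v" unfolding symp_det det by (simp add: symp_def)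
    ultimately show ?thesis by simp
  qed
  have "ppav_aut D \<tau> ?M" unfolding ppav_aut_def using endM endN MN symp by blast
  moreover have "cmat_order ?M n" using order_equiv2[OF E] A(2) by simp
  moreover have "\<forall>x \<in> OD D. ?M ** iota D \<tau> x = iota D \<tau> x ** ?M"
    by (simp add: iota_eq diag_commute)
  ultimately show ?thesis by blast
qed

lemma sp01: "sp (0,1) = sqrt (real_of_int D)" by (simp add: sigp_def)
lemma sm01: "sm (0,1) = - sqrt (real_of_int D)" by (simp add: sigm_def)

lemma two_core:
  assumes M: "ppav_aut D \<tau> M" "\<forall>x \<in> OD D. M ** iota D \<tau> x = iota D \<tau> x ** M"
  shows "\<exists>A. A \<in> SL_Lambda D \<and> eqs (M$1$1) (M$2$2) A \<and> M = diag (M$1$1) (M$2$2)"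
proof -
  have "M ** iota D \<tau> (0,1) = iota D \<tau> (0,1) ** M" using M(2) O_sqrt by blast
  moreover have "(of_real (sp (0,1)) :: complex) \<noteq> of_real (sm (0,1))"
    using D_pos by (simp add: sp01 sm01)
  ultimately have Md: "M = diag (M$1$1) (M$2$2)" using commute_diag by (simp add: iota_eq)
  have "is_end D \<tau> M" using M(1) unfolding ppav_aut_def by auto
  then obtain A where ent: "ent A" and E: "eqs (M$1$1) (M$2$2) A" using end_diag Md by metis
  have sy: "\<And>u v u' v'. u \<in> LambdaD D \<Longrightarrow> v \<in> LambdaD D \<Longrightarrow> u' \<in> LambdaD D \<Longrightarrow> v' \<in> LambdaD D \<Longrightarrow>
        M *v phi D \<tau> u = phi D \<tau> u' \<Longrightarrow> M *v phi D \<tau> v = phi D \<tau> v' \<Longrightarrow> symp D u' v' = symp D u v"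
    using M(1) unfolding ppav_aut_def by blast
  have tr: "ktrace (km (kdet A) y) = ktrace y" if y: "y \<in> OD_dual D" for y
  proof -
    let ?u = "(kone, kzero)" and ?v = "(kzero, y)"
    have L: "?u \<in> LambdaD D" "?v \<in> LambdaD D" unfolding LambdaD_def using O_one O_zero dual_zero y by auto
    have "M *v phi D \<tau> ?u = phi D \<tau> (mv A ?u)" "M *v phi D \<tau> ?v = phi D \<tau> (mv A ?v)"
      using diag_act[OF E] Md by metis+
    hence "symp D (mv A ?u) (mv A ?v) = symp D ?u ?v"
      using sy L mv_Lambda[OF ent] by blast
    thus ?thesis unfolding symp_det by (simp add: symp_def)
  qed
  obtain p q where pq: "kdet A = (p,q)" by (cases "kdet A")
  have "ktrace (km (p,q) (0, 1 / of_int D)) = ktrace (0, 1 / of_int D)" using tr[OF dual_y0] pq by simp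
  hence q: "q = 0" using D_rat_nz by (simp add: ktrace_def kmul_def)
  have "ktrace (km (p,q) (1/2, 1/2)) = ktrace (1/2, 1/2)" using tr[OF dual_y1] pq by simp
  hence p: "p = 1" using q by (simp add: ktrace_def kmul_def)
  have "kdet A = kone" using pq p q by (simp add: kone_def)
  hence "A \<in> SL_Lambda D" using ent SL_iff by simp
  thus ?thesis using E Md by blast
qed

lemma two_one:
  assumes M: "ppav_aut D \<tau> M" "cmat_order M n" "\<forall>x \<in> OD D. M ** iota D \<tau> x = iota D \<tau> x ** M"
  shows "\<exists>A \<in> SL_Lambda D. kmat_order D A n \<and> sl_act D A \<tau> = \<tau>"
proof -
  obtain A where A: "A \<in> SL_Lambda D" and E: "eqs (M$1$1) (M$2$2) A" and Md: "M = diag (M$1$1) (M$2$2)"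
    using two_core[OF M(1,3)] by blast
  obtain a b c d where Ad: "A = (a,b,c,d)" by (cases A) auto
  have det: "kdet A = kone" using SL_ent[OF A] by simp
  have "kmat_order D A n" using order_equiv2[OF E] M(2) Md by simp
  moreover have "sl_act D A \<tau> = \<tau>"
  proof -
    have e1: "M$1$1 = of_real (sp a) + of_real (sp c) * fst \<tau>" "M$2$2 = of_real (sm a) + of_real (sm c) * snd \<tau>"
      using E unfolding eqs_def Ad by auto
    show ?thesis using E fix_iff[OF Ad det] unfolding e1 by simp
  qed
  ultimately show ?thesis using A by blast
qed

end


lemma norm_root1:
  fixes z :: complex assumes "z ^ n = 1" "n > 0" shows "norm z = 1"
proof -
  have "norm z ^ n = 1" using assms(1) by (metis norm_one norm_power)
  hence "norm z ^ n = 1 ^ n" by simp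
  thus ?thesis using assms(2) power_eq_imp_eq_base[of "norm z" n 1] by simp
qed

lemma cnj_mult_root1:
  fixes z :: complex assumes "z ^ n = 1" "n > 0" shows "cnj z * z = 1"
proof -
  have "z * cnj z = complex_of_real ((norm z)\<^sup>2)" by (rule complex_norm_square[symmetric])
  thus ?thesis using norm_root1[OF assms] by (simp add: mult.commute)
qed

lemma quad_aux:
  fixes z A B C E t :: complex
  assumes "z = A + C * t" "z * t = B + E * t" "A * E - B * C = 1"
  shows "z * z = (A + E) * z - 1"
proof -
  have "z * z = A * z + C * (z * t)" using assms(1) by (simp add: algebra_simps)
  also have "\<dots> = A * z + C * B + E * (C * t)" using assms(2) by (simp add: algebra_simps)
  also have "\<dots> = A * z + C * B + E * (z - A)" using assms(1) by simp
  also have "\<dots> = (A + E) * z - (A * E - B * C)" by (simp add: algebra_simps)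
  finally show ?thesis using assms(3) by simp
qed

lemma mul_aux:
  fixes al T P Q P' Q' :: complex
  assumes "al * al = T * al - 1"
  shows "(P + Q * al) * (P' + Q' * al) = (P * P' - Q * Q') + (P * Q' + Q * P' + Q * Q' * T) * al"
proof -
  have "(P + Q * al) * (P' + Q' * al) = P * P' + (P * Q' + Q * P') * al + Q * Q' * (al * al)"
    by (simp add: algebra_simps)
  also have "\<dots> = (P * P' - Q * Q') + (P * Q' + Q * P' + Q * Q' * T) * al" unfolding assms
    by (simp add: algebra_simps)
  finally show ?thesis .
qed

locale qd2 = qd +
  fixes n :: nat and \<alpha> \<beta> :: complex and a b c d :: kd
  assumes n2: "n > 2"
    and ASL: "(a,b,c,d) \<in> SL_Lambda D"
    and Eqs: "eqs \<alpha> \<beta> (a,b,c,d)"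
    and Ord_n: "cmat_order (diag \<alpha> \<beta>) n"
begin

abbreviation "AA \<equiv> (a,b,c,d)"
definition "t = kadd a d"

lemma entA: "ent AA" and detA: "kdet AA = kone" using SL_ent[OF ASL] by auto

lemma eA: "\<alpha> = of_real (sp a) + of_real (sp c) * fst \<tau>" "\<alpha> * fst \<tau> = of_real (sp b) + of_real (sp d) * fst \<tau>"
  "\<beta> = of_real (sm a) + of_real (sm c) * snd \<tau>" "\<beta> * snd \<tau> = of_real (sm b) + of_real (sm d) * snd \<tau>"
  using Eqs unfolding eqs_def by auto

lemma dp: "of_real (sp a) * of_real (sp d) - of_real (sp b) * of_real (sp c) = (1::complex)"
  using det_sp[OF refl detA] by (metis of_real_1 of_real_diff of_real_mult)
lemma dm: "of_real (sm a) * of_real (sm d) - of_real (sm b) * of_real (sm c) = (1::complex)"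
  using det_sm[OF refl detA] by (metis of_real_1 of_real_diff of_real_mult)

lemma quad: "\<alpha> * \<alpha> = of_real (sp t) * \<alpha> - 1" "\<beta> * \<beta> = of_real (sm t) * \<beta> - 1"
  using quad_aux[OF eA(1,2) dp] quad_aux[OF eA(3,4) dm] by (simp_all add: t_def)

lemma n0: "n > 0" using n2 by simp

lemma pow_n: "\<alpha> ^ n = 1" "\<beta> ^ n = 1"
  using Ord_n unfolding cmat_order_def by (simp_all add: cmat_pow_diag mat1_diag diag_eq_iff)

lemma pow_iff: "\<alpha> ^ k = 1 \<longleftrightarrow> \<beta> ^ k = 1"
proof
  assume h: "\<alpha> ^ k = 1"
  have "kmat_pow D AA k = kmat_id"
  proof (rule kmat_eqI)
    fix u
    have "cmat_pow (diag \<alpha> \<beta>) k *v phi D \<tau> u = phi D \<tau> (mv (kmat_pow D AA k) u)"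
      by (rule mv_pow_act[OF Eqs])
    hence "of_real (sp (fst u)) + of_real (sp (snd u)) * fst \<tau> =
           of_real (sp (fst (mv (kmat_pow D AA k) u))) + of_real (sp (snd (mv (kmat_pow D AA k) u))) * fst \<tau>"
      using h by (simp add: cmat_pow_diag phi_eq diag_mv vec2_eq_iff)
    hence "mv (kmat_pow D AA k) u = u" using cp_unique by (metis prod.collapse)
    thus "mv (kmat_pow D AA k) u = mv kmat_id u" by (simp add: mv_id)
  qed
  hence "cmat_pow (diag \<alpha> \<beta>) k = mat 1" using order_equiv[OF Eqs] by simp
  thus "\<beta> ^ k = 1" by (simp add: cmat_pow_diag mat1_diag diag_eq_iff)
next
  assume h: "\<beta> ^ k = 1"
  have "kmat_pow D AA k = kmat_id"
  proof (rule kmat_eqI)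
    fix u
    have "cmat_pow (diag \<alpha> \<beta>) k *v phi D \<tau> u = phi D \<tau> (mv (kmat_pow D AA k) u)"
      by (rule mv_pow_act[OF Eqs])
    hence "of_real (sm (fst u)) + of_real (sm (snd u)) * snd \<tau> =
           of_real (sm (fst (mv (kmat_pow D AA k) u))) + of_real (sm (snd (mv (kmat_pow D AA k) u))) * snd \<tau>"
      using h by (simp add: cmat_pow_diag phi_eq diag_mv vec2_eq_iff)
    hence "mv (kmat_pow D AA k) u = u" using cm_unique by (metis prod.collapse)
    thus "mv (kmat_pow D AA k) u = mv kmat_id u" by (simp add: mv_id)
  qed
  hence "cmat_pow (diag \<alpha> \<beta>) k = mat 1" using order_equiv[OF Eqs] by simp
  thus "\<alpha> ^ k = 1" by (simp add: cmat_pow_diag mat1_diag diag_eq_iff)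
qed

lemma prim: "primitive_root n \<alpha>"
  unfolding primitive_root_def
proof (intro conjI allI impI)
  show "\<alpha> ^ n = 1" by (rule pow_n)
  fix k assume k: "0 < k \<and> k < n"
  show "\<alpha> ^ k \<noteq> 1"
  proof
    assume "\<alpha> ^ k = 1"
    moreover hence "\<beta> ^ k = 1" using pow_iff by blast
    ultimately have "cmat_pow (diag \<alpha> \<beta>) k = mat 1" by (simp add: cmat_pow_diag mat1_diag)
    thus False using Ord_n k unfolding cmat_order_def by blast
  qed
qed

lemma alpha_sq_ne1: "\<alpha> ^ 2 \<noteq> 1" using prim n2 unfolding primitive_root_def by auto

lemma Im_alpha: "Im \<alpha> \<noteq> 0"
proof
  assume h: "Im \<alpha> = 0"
  have "norm \<alpha> = 1" using norm_root1[OF pow_n(1) n0] .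
  hence "\<bar>Re \<alpha>\<bar> = 1" using h by (simp add: cmod_def)
  hence "Re \<alpha> * Re \<alpha> = 1" by (metis abs_mult_self_eq mult_1)
  hence "\<alpha> ^ 2 = 1" using h by (simp add: complex_eq_iff power2_eq_square)
  thus False using alpha_sq_ne1 by simp
qed

lemma alpha_nz0: "\<alpha> \<noteq> 0" using Im_alpha by auto

lemma cnj_alpha: "cnj \<alpha> = of_real (sp t) - \<alpha>"
proof -
  have "cnj \<alpha> * \<alpha> = 1" by (rule cnj_mult_root1[OF pow_n(1) n0])
  moreover have "(of_real (sp t) - \<alpha>) * \<alpha> = 1" using quad(1) by (simp add: algebra_simps)
  ultimately show ?thesis using alpha_nz0 by (metis mult_cancel_right)
qed

definition emb :: "kd \<Rightarrow> kd \<Rightarrow> complex" where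
  "emb p q = of_real (sp p) + of_real (sp q) * \<alpha>"
definition emb2 :: "kd \<Rightarrow> kd \<Rightarrow> complex" where
  "emb2 p q = of_real (sm p) + of_real (sm q) * \<beta>"

lemma emb_unique: "emb p q = emb p' q' \<Longrightarrow> p = p' \<and> q = q'"
  unfolding emb_def using re_im_unique[OF Im_alpha] sp_inj by blast

lemma emb_add: "emb p q + emb p' q' = emb (kadd p p') (kadd q q')"
  unfolding emb_def by (simp add: algebra_simps)
lemma emb2_add: "emb2 p q + emb2 p' q' = emb2 (kadd p p') (kadd q q')"
  unfolding emb2_def by (simp add: algebra_simps)

definition kml where "kml p q p' q' = ksub (km p p') (km q q')"
definition kmr where "kmr p q p' q' = kadd (kadd (km p q') (km q p')) (km (km q q') t)"

lemma emb_mul: "emb p q * emb p' q' = emb (kml p q p' q') (kmr p q p' q')"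
  unfolding emb_def kml_def kmr_def mul_aux[OF quad(1)] by simp
lemma emb2_mul: "emb2 p q * emb2 p' q' = emb2 (kml p q p' q') (kmr p q p' q')"
  unfolding emb2_def kml_def kmr_def mul_aux[OF quad(2)] by simp

lemma emb_real: "emb x kzero = of_real (sp x)" unfolding emb_def by simp
lemma emb2_real: "emb2 x kzero = of_real (sm x)" unfolding emb2_def by simp
lemma emb_one: "emb kone kzero = 1" unfolding emb_def by simp
lemma emb2_one: "emb2 kone kzero = 1" unfolding emb2_def by simp
lemma emb_alpha: "emb kzero kone = \<alpha>" unfolding emb_def by simp

lemma emb_cnj: "cnj (emb p q) = emb (kadd p (km q t)) (ksub kzero q)"
  unfolding emb_def by (simp add: cnj_alpha algebra_simps)

definition LL :: "complex set" where "LL = {of_real (sp p) + of_real (sp q) * \<alpha> | p q. True}"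

lemma inLL: "z \<in> LL \<longleftrightarrow> (\<exists>p q. z = emb p q)" unfolding LL_def emb_def by auto
lemma emb_LL[simp]: "emb p q \<in> LL" using inLL by blast

definition crd :: "complex \<Rightarrow> kd \<times> kd" where "crd z = (SOME pq. z = emb (fst pq) (snd pq))"
lemma crd_emb: "crd (emb p q) = (p, q)"
proof -
  have "\<exists>pq. emb p q = emb (fst pq) (snd pq)" by (rule exI[of _ "(p,q)"]) simp
  hence "emb p q = emb (fst (crd (emb p q))) (snd (crd (emb p q)))"
    unfolding crd_def by (rule someI_ex)
  thus ?thesis using emb_unique by (metis prod.collapse)
qed

definition phi2 :: "complex \<Rightarrow> complex" where "phi2 z = emb2 (fst (crd z)) (snd (crd z))"
lemma phi2_emb: "phi2 (emb p q) = emb2 p q" unfolding phi2_def crd_emb by simp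

definition rho :: "complex \<Rightarrow> cmat" where "rho z = diag z (phi2 z)"
lemma rho_emb: "rho (emb p q) = diag (emb p q) (emb2 p q)" unfolding rho_def phi2_emb ..

definition kinv :: "kd \<Rightarrow> kd" where
  "kinv r = (fst r * inverse (fst r * fst r - of_int D * snd r * snd r), - snd r * inverse (fst r * fst r - of_int D * snd r * snd r))"

lemma kinv: assumes "r \<noteq> kzero" shows "km r (kinv r) = kone"
proof -
  have "sp r * sm r = real_of_rat (fst r * fst r - of_int D * snd r * snd r)"
    using sqD by (simp add: sigp_def sigm_def of_rat_diff of_rat_mult of_rat_of_int_eq algebra_simps)
  moreover have "sp r * sm r \<noteq> 0" using assms sp_eq0 sm_eq0 by simp
  ultimately have N: "fst r * fst r - of_int D * snd r * snd r \<noteq> 0" by auto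
  define NN where "NN = fst r * fst r - of_int D * snd r * snd r"
  have N': "NN \<noteq> 0" using N unfolding NN_def .
  have c1: "fst r * (fst r * inverse NN) + of_int D * snd r * (- snd r * inverse NN) = NN * inverse NN"
    unfolding NN_def by (simp add: algebra_simps)
  have c2: "fst r * (- snd r * inverse NN) + snd r * (fst r * inverse NN) = 0"
    by (simp add: algebra_simps)
  show ?thesis using c1 c2 N' unfolding kinv_def kmul_def kone_def NN_def[symmetric] by simp
qed

lemma sp_kinv: "r \<noteq> kzero \<Longrightarrow> sp (kinv r) = 1 / sp r"
  using kinv[of r] sp_mul[of r "kinv r"] sp_one sp_eq0[of r] by (simp add: field_simps)

lemma LL_sub: "subfield_C LL"
  unfolding subfield_C_def
proof (intro conjI ballI)
  show "0 \<in> LL" using emb_LL[of kzero kzero] unfolding emb_def by simp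
  show "1 \<in> LL" using emb_LL[of kone kzero] emb_one by simp
  fix x assume x: "x \<in> LL"
  then obtain p q where xd: "x = emb p q" using inLL by blast
  show "- x \<in> LL" using emb_LL[of "ksub kzero p" "ksub kzero q"] unfolding xd emb_def by simp
  {
    fix y assume "y \<in> LL"
    then obtain p' q' where yd: "y = emb p' q'" using inLL by blast
    show "x + y \<in> LL" unfolding xd yd emb_add by simp
    show "x * y \<in> LL" unfolding xd yd emb_mul by simp
  }
  show "inverse x \<in> LL"
  proof (cases "x = 0")
    case True thus ?thesis using \<open>0 \<in> LL\<close> by simp
  next
    case False
    obtain r s where w: "x * cnj x = emb r s"
      using emb_mul[of p q "kadd p (km q t)" "ksub kzero q"] unfolding xd emb_cnj by blast
    have "Im (x * cnj x) = 0" by simp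
    hence "sp s * Im \<alpha> = 0" unfolding w emb_def by simp
    hence "s = kzero" using Im_alpha sp_eq0 by simp
    hence w2: "x * cnj x = of_real (sp r)" unfolding w emb_def by simp
    have "x * cnj x \<noteq> 0" using False by simp
    hence rnz: "r \<noteq> kzero" using w2 sp_zero by auto
    have "x * (cnj x * of_real (sp (kinv r))) = (x * cnj x) * of_real (sp (kinv r))"
      by (simp add: mult.assoc)
    also have "\<dots> = of_real (sp r * sp (kinv r))" unfolding w2 by simp
    also have "\<dots> = 1" using sp_kinv[OF rnz] sp_eq0[of r] rnz by simp
    finally have "inverse x = cnj x * of_real (sp (kinv r))" by (rule inverse_unique)
    also have "\<dots> = emb (kadd p (km q t)) (ksub kzero q) * emb (kinv r) kzero"
      unfolding xd emb_cnj emb_real ..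
    finally show ?thesis using emb_mul by simp
  qed
qed

end


lemma lin2:
  fixes z A B C E t P Q :: complex
  assumes "z = A + C * t" "z * t = B + E * t"
  shows "P + Q * z = (P + Q * A) + (Q * C) * t" "(P + Q * z) * t = (Q * B) + (P + Q * E) * t"
proof -
  show "P + Q * z = (P + Q * A) + (Q * C) * t" using assms(1) by (simp add: algebra_simps)
  have "(P + Q * z) * t = P * t + Q * (z * t)" by (simp add: algebra_simps)
  also have "\<dots> = (Q * B) + (P + Q * E) * t" using assms(2) by (simp add: algebra_simps)
  finally show "(P + Q * z) * t = (Q * B) + (P + Q * E) * t" .
qed

lemma end_add: "is_end D \<tau> M \<Longrightarrow> is_end D \<tau> N \<Longrightarrow> qd D \<tau> \<Longrightarrow> is_end D \<tau> (M + N)"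
proof -
  assume M: "is_end D \<tau> M" and N: "is_end D \<tau> N" and q: "qd D \<tau>"
  interpret qd D \<tau> by (rule q)
  show ?thesis unfolding is_end_def
  proof
    fix p assume p: "p \<in> lattice D \<tau>"
    have "M *v p \<in> lattice D \<tau>" "N *v p \<in> lattice D \<tau>" using M N p unfolding is_end_def by auto
    then obtain u v where "u \<in> LambdaD D" "v \<in> LambdaD D" "M *v p = phi D \<tau> u" "N *v p = phi D \<tau> v"
      unfolding lattice_def by auto
    hence "(M + N) *v p = phi D \<tau> (padd u v)" "padd u v \<in> LambdaD D"
      by (simp_all add: matrix_vector_mult_add_rdistrib phi_add Lambda_add)
    thus "(M + N) *v p \<in> lattice D \<tau>" unfolding lattice_def by auto
  qed
qed

lemma end_mul: "is_end D \<tau> M \<Longrightarrow> is_end D \<tau> N \<Longrightarrow> is_end D \<tau> (M ** N)"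
  unfolding is_end_def by (simp add: matrix_vector_mul_assoc[symmetric])

context qd2 begin

lemma rho_add: "z \<in> LL \<Longrightarrow> w \<in> LL \<Longrightarrow> rho (z + w) = rho z + rho w"
  unfolding inLL by (auto simp: emb_add rho_emb diag_plus emb2_add)
lemma rho_mul: "z \<in> LL \<Longrightarrow> w \<in> LL \<Longrightarrow> rho (z * w) = rho z ** rho w"
  unfolding inLL by (auto simp: emb_mul rho_emb diag_mult emb2_mul)
lemma rho_one: "rho 1 = mat 1"
  using rho_emb[of kone kzero] emb_one emb2_one mat1_diag by simp
lemma rho_real: "rho (of_real (sp x)) = iota D \<tau> x"
  using rho_emb[of x kzero] emb_real emb2_real iota_eq by simp

definition PP :: "kd \<Rightarrow> kd \<Rightarrow> kmat" where
  "PP p q = (kadd p (km q a), km q b, km q c, kadd p (km q d))"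

lemma eqsP: "eqs (emb p q) (emb2 p q) (PP p q)"
  unfolding eqs_def PP_def emb_def emb2_def
  using lin2[OF eA(1,2), of "of_real (sp p)" "of_real (sp q)"] lin2[OF eA(3,4), of "of_real (sm p)" "of_real (sm q)"]
  by simp

lemma eqs_unique:
  assumes "eqs z1 z2 A" "eqs z1 z2 B" shows "A = B"
proof -
  obtain a1 b1 c1 d1 where A: "A = (a1,b1,c1,d1)" by (cases A) auto
  obtain a2 b2 c2 d2 where B: "B = (a2,b2,c2,d2)" by (cases B) auto
  have "of_real (sp a1) + of_real (sp c1) * fst \<tau> = of_real (sp a2) + of_real (sp c2) * fst \<tau>"
       "of_real (sp b1) + of_real (sp d1) * fst \<tau> = of_real (sp b2) + of_real (sp d2) * fst \<tau>"
    using assms unfolding A B eqs_def by auto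
  thus ?thesis unfolding A B using cp_unique by blast
qed

definition Ordr :: "complex set" where "Ordr = {z \<in> LL. is_end D \<tau> (rho z)}"

lemma inOrdr: "emb p q \<in> Ordr \<longleftrightarrow> ent (PP p q)"
proof
  assume "emb p q \<in> Ordr"
  hence "is_end D \<tau> (diag (emb p q) (emb2 p q))" by (simp add: Ordr_def rho_emb)
  then obtain A where "ent A" "eqs (emb p q) (emb2 p q) A" using end_diag by blast
  thus "ent (PP p q)" using eqs_unique eqsP by metis
next
  assume "ent (PP p q)"
  hence "is_end D \<tau> (diag (emb p q) (emb2 p q))" using end_of_ent eqsP by blast
  thus "emb p q \<in> Ordr" by (simp add: Ordr_def rho_emb)
qed

lemma Ordr_LL: "Ordr \<subseteq> LL" unfolding Ordr_def by auto

lemma Ordr_add: "z \<in> Ordr \<Longrightarrow> w \<in> Ordr \<Longrightarrow> z + w \<in> Ordr"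
  unfolding Ordr_def using rho_add end_add qd_axioms LL_sub unfolding subfield_C_def by auto
lemma Ordr_mul: "z \<in> Ordr \<Longrightarrow> w \<in> Ordr \<Longrightarrow> z * w \<in> Ordr"
  unfolding Ordr_def using rho_mul end_mul LL_sub unfolding subfield_C_def by auto

lemma Ordr_real: "x \<in> OD D \<Longrightarrow> of_real (sp x) \<in> Ordr"
proof -
  assume x: "x \<in> OD D"
  have "PP x kzero = (x, kzero, kzero, x)" unfolding PP_def by simp
  hence "ent (PP x kzero)" using x sq_zero dual_zero unfolding ent_def by simp
  thus ?thesis using inOrdr emb_real by metis
qed

lemma Ordr_one: "1 \<in> Ordr" using Ordr_real[OF O_one] by simp

lemma Ordr_alpha: "\<alpha> \<in> Ordr"
proof -
  have "PP kzero kone = AA" unfolding PP_def by simp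
  thus ?thesis using inOrdr entA emb_alpha by metis
qed

lemma Ordr_neg: "z \<in> Ordr \<Longrightarrow> - z \<in> Ordr"
proof -
  assume z: "z \<in> Ordr"
  have "of_real (sp (ksub kzero kone)) \<in> Ordr" using Ordr_real[OF O_neg[OF O_one]] .
  hence "of_real (sp (ksub kzero kone)) * z \<in> Ordr" using Ordr_mul z by blast
  thus ?thesis by simp
qed

lemma Ordr_zero: "0 \<in> Ordr" using Ordr_add[OF Ordr_one Ordr_neg[OF Ordr_one]] by simp

lemma Ordr_int: "of_int k \<in> Ordr"
proof -
  have "of_real (sp (of_int k, 0)) \<in> Ordr" using Ordr_real[OF O_int] .
  thus ?thesis by simp
qed

lemma Ordr_sum: "finite S \<Longrightarrow> (\<And>s. s \<in> S \<Longrightarrow> f s \<in> Ordr) \<Longrightarrow> sum f S \<in> Ordr"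
  by (induction S rule: finite_induct) (auto intro: Ordr_add Ordr_zero)

lemma Ordr_cnj:
  assumes "emb p q \<in> Ordr"
  shows "cnj (emb p q) \<in> Ordr"
    and "PP (kadd p (km q t)) (ksub kzero q) = (kadd p (km q d), ksub kzero (km q b), ksub kzero (km q c), kadd p (km q a))"
proof -
  show P: "PP (kadd p (km q t)) (ksub kzero q) = (kadd p (km q d), ksub kzero (km q b), ksub kzero (km q c), kadd p (km q a))"
    unfolding PP_def t_def by (simp, intro conjI; rule sp_eqI; simp add: algebra_simps)
  have "ent (PP p q)" using assms inOrdr by blast
  hence "ent (PP (kadd p (km q t)) (ksub kzero q))" unfolding P unfolding PP_def ent_def
    using sq_neg dual_neg by auto
  thus "cnj (emb p q) \<in> Ordr" unfolding emb_cnj inOrdr .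
qed

lemma rosati:
  assumes "z \<in> Ordr" "u \<in> LambdaD D" "v \<in> LambdaD D" "u' \<in> LambdaD D" "v' \<in> LambdaD D"
    "rho z *v phi D \<tau> u = phi D \<tau> u'" "rho (cnj z) *v phi D \<tau> v = phi D \<tau> v'"
  shows "symp D u' v = symp D u v'"
proof -
  obtain p q where z: "z = emb p q" using assms(1) Ordr_LL inLL by blast
  have "u' = mv (PP p q) u" using assms(6) diag_act[OF eqsP] phi_inj unfolding z rho_emb by metis
  moreover have "v' = mv (PP (kadd p (km q t)) (ksub kzero q)) v"
    using assms(7) diag_act[OF eqsP] phi_inj unfolding z rho_emb emb_cnj by metis
  hence "v' = mv (kadd p (km q d), ksub kzero (km q b), ksub kzero (km q c), kadd p (km q a)) v"
    using Ordr_cnj(2)[OF assms(1)[unfolded z]] by simp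
  ultimately show ?thesis unfolding PP_def by (simp add: symp_adj)
qed

end


definition dn :: "int \<Rightarrow> kd \<Rightarrow> bool" where
  "dn N x \<longleftrightarrow> of_int N * fst x \<in> \<int> \<and> of_int N * snd x \<in> \<int>"

lemma dn_dvd: assumes "dn N x" "N dvd M" shows "dn M x"
proof -
  obtain k where M: "M = N * k" using assms(2) by blast
  have h: "of_int k * (of_int N * fst x) \<in> \<int>" "of_int k * (of_int N * snd x) \<in> \<int>"
    using assms(1) Ints_mult Ints_of_int unfolding dn_def by blast+
  have e: "of_int M * fst x = of_int k * (of_int N * fst x)" "of_int M * snd x = of_int k * (of_int N * snd x)"
    unfolding M by (simp_all add: algebra_simps)
  show ?thesis unfolding dn_def by (subst e(1), subst e(2)) (rule conjI; rule h)
qed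

lemma rat_den: "\<exists>q::int. q > 0 \<and> of_int q * (r::rat) \<in> \<int>"
proof -
  obtain p q where pq: "quotient_of r = (p, q)" by (cases "quotient_of r")
  have "q > 0" using quotient_of_denom_pos[OF pq] .
  moreover have "of_int q * r = of_int p" using quotient_of_div[OF pq] \<open>q > 0\<close> by simp
  ultimately show ?thesis by (metis Ints_of_int)
qed

lemma dn_ex: "\<exists>N>0. dn N x"
proof -
  obtain q1 where q1: "q1 > 0" "of_int q1 * fst x \<in> \<int>" using rat_den by blast
  obtain q2 where q2: "q2 > 0" "of_int q2 * snd x \<in> \<int>" using rat_den by blast
  have e: "of_int (q1 * q2) * fst x = of_int q2 * (of_int q1 * fst x)"
       "of_int (q1 * q2) * snd x = of_int q1 * (of_int q2 * snd x)" by (simp_all add: algebra_simps)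
  have h: "of_int q2 * (of_int q1 * fst x) \<in> \<int>" "of_int q1 * (of_int q2 * snd x) \<in> \<int>"
    using q1 q2 Ints_mult Ints_of_int by blast+
  have "dn (q1 * q2) x" unfolding dn_def by (subst e(1), subst e(2)) (rule conjI; rule h)
  thus ?thesis using q1 q2 by (intro exI[of _ "q1*q2"]) simp
qed

lemma dn_sub: "dn N x \<Longrightarrow> dn N y \<Longrightarrow> dn N (ksub x y)"
  unfolding dn_def ksub_def by (simp add: right_diff_distrib Ints_diff)
lemma dn_add: "dn N x \<Longrightarrow> dn N y \<Longrightarrow> dn N (kadd x y)"
  unfolding dn_def kadd_def by (simp add: distrib_left Ints_add)

lemma dn_mul: assumes "dn N x" "dn N' y" shows "dn (N * N') (kmul D x y)"
proof -
  have "of_int (N * N') * fst (kmul D x y) = (of_int N * fst x) * (of_int N' * fst y) + of_int D * ((of_int N * snd x) * (of_int N' * snd y))"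
       "of_int (N * N') * snd (kmul D x y) = (of_int N * fst x) * (of_int N' * snd y) + (of_int N * snd x) * (of_int N' * fst y)"
    by (simp_all add: kmul_def algebra_simps)
  thus ?thesis using assms unfolding dn_def by (simp add: Ints_mult Ints_add)
qed

context qd2 begin

lemma dn_O: "x \<in> OD D \<Longrightarrow> dn (2 * D) x"
  unfolding OD_iff dn_def
proof (elim exE)
  fix m k assume x: "x = (of_int m + of_int k * of_int D / 2, of_int k / 2)"
  have "of_int (2 * D) * fst x = of_int (2 * D * m + k * D * D)" "of_int (2 * D) * snd x = of_int (D * k)"
    unfolding x by (simp_all add: field_simps)
  thus "of_int (2 * D) * fst x \<in> \<int> \<and> of_int (2 * D) * snd x \<in> \<int>" by (metis Ints_of_int)
qed

lemma dn_dual: "x \<in> OD_dual D \<Longrightarrow> dn (2 * D) x"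
  unfolding dual_iff dn_def
proof (elim exE)
  fix m k assume x: "x = (of_int k / 2, of_int m / of_int D + of_int k / 2)"
  have "of_int (2 * D) * fst x = of_int (D * k)" "of_int (2 * D) * snd x = of_int (2 * m + D * k)"
    unfolding x using D_rat_nz by (simp_all add: field_simps)
  thus "of_int (2 * D) * fst x \<in> \<int> \<and> of_int (2 * D) * snd x \<in> \<int>" by (metis Ints_of_int)
qed

lemma c_nz: "c \<noteq> kzero"
proof
  assume "c = kzero"
  hence "\<alpha> = of_real (sp a)" using eA(1) by simp
  thus False using Im_alpha by simp
qed

lemma den_bound: "\<exists>N>0. \<forall>p q. emb p q \<in> Ordr \<longrightarrow> dn N p \<and> dn N q"
proof -
  let ?ci = "kinv c"
  have cci: "km c ?ci = kone" using kinv[OF c_nz] .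
  obtain Nc where Nc: "Nc > 0" "dn Nc ?ci" using dn_ex by blast
  obtain Na where Na: "Na > 0" "dn Na a" using dn_ex by blast
  define N where "N = 4 * D * D * Nc * Na"
  have N0: "N > 0" unfolding N_def using Nc Na D_pos by simp
  have "dn N p \<and> dn N q" if pq: "emb p q \<in> Ordr" for p q
  proof -
    have ent: "ent (PP p q)" using pq inOrdr by blast
    have qc: "km q c \<in> OD_dual D" and pa: "kadd p (km q a) \<in> OD D" using ent unfolding PP_def ent_def by auto
    have qeq: "q = km (km q c) ?ci"
    proof (rule sp_eqI)
      have "sp c * sp ?ci = 1" using cci by (metis sp_mul sp_one)
      thus "sp q = sp (km (km q c) ?ci)" by (simp add: mult.assoc)
    qed
    have "dn (2 * D * Nc) (km (km q c) ?ci)" by (rule dn_mul[OF dn_dual[OF qc] Nc(2)])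
    hence dq: "dn (2 * D * Nc) q" using qeq by simp
    have dqa: "dn (2 * D * Nc * Na) (km q a)" by (rule dn_mul[OF dq Na(2)])
    have peq: "p = ksub (kadd p (km q a)) (km q a)"
      by (cases p, cases "km q a") (simp add: kadd_def ksub_def)
    have d1: "dn N (kadd p (km q a))" using dn_dvd[OF dn_O[OF pa]] unfolding N_def by simp
    have d2: "dn N (km q a)" using dn_dvd[OF dqa] unfolding N_def by (simp add: algebra_simps)
    have "dn N p" using dn_sub[OF d1 d2] peq by simp
    moreover have "dn N q" using dn_dvd[OF dq] unfolding N_def by (simp add: algebra_simps)
    ultimately show ?thesis by simp
  qed
  thus ?thesis using N0 by blast
qed

definition "e2 = complex_of_real (sp (0,1))"
definition "e4 = e2 * \<alpha>"

lemma e_Ordr: "1 \<in> Ordr" "e2 \<in> Ordr" "\<alpha> \<in> Ordr" "e4 \<in> Ordr"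
  using Ordr_one Ordr_real[OF O_sqrt] Ordr_alpha Ordr_mul unfolding e2_def e4_def by auto

lemma emb_int: "emb (of_int i1, of_int i2) (of_int i3, of_int i4) =
   of_int i1 * 1 + of_int i2 * e2 + of_int i3 * \<alpha> + of_int i4 * e4"
  unfolding emb_def e2_def e4_def by (simp add: sigp_def algebra_simps)

lemma emb_int_Ordr: "emb (of_int i1, of_int i2) (of_int i3, of_int i4) \<in> Ordr"
  unfolding emb_int using e_Ordr Ordr_int Ordr_add Ordr_mul by metis

lemma emb_scale: "of_int N * emb (p1,p2) (q1,q2) = emb (of_int N * p1, of_int N * p2) (of_int N * q1, of_int N * q2)"
  unfolding emb_def by (simp add: sigp_def of_rat_mult algebra_simps)

lemma span_LL: "x \<in> LL \<Longrightarrow> \<exists>m::int. m > 0 \<and> of_int m * x \<in> Ordr"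
proof -
  assume "x \<in> LL"
  then obtain p1 p2 q1 q2 where x: "x = emb (p1,p2) (q1,q2)" using inLL by (metis prod.collapse)
  obtain N1 where N1: "N1 > 0" "dn N1 (p1,p2)" using dn_ex by blast
  obtain N2 where N2: "N2 > 0" "dn N2 (q1,q2)" using dn_ex by blast
  have d1: "dn (N1*N2) (p1,p2)" "dn (N1*N2) (q1,q2)" using dn_dvd N1 N2 by auto
  then obtain i1 i2 i3 i4 where "of_int (N1*N2) * p1 = of_int i1" "of_int (N1*N2) * p2 = of_int i2"
     "of_int (N1*N2) * q1 = of_int i3" "of_int (N1*N2) * q2 = of_int i4"
    unfolding dn_def by (auto elim!: Ints_cases)
  hence "of_int (N1*N2) * x = emb (of_int i1, of_int i2) (of_int i3, of_int i4)"
    unfolding x emb_scale by simp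
  thus ?thesis using emb_int_Ordr N1 N2 by (intro exI[of _ "N1*N2"]) simp
qed

end


lemma sum_delta_c:
  fixes S :: "complex set"
  assumes "finite S" "x \<in> S"
  shows "(\<Sum>s\<in>S. (if s = x then of_int k * s else 0)) = of_int k * x"
  using sum.delta[OF assms(1), of x "\<lambda>s. of_int k * s"] assms(2) by simp

context qd2 begin

lemma coord_split:
  assumes N: "N > 0" and h: "of_int N * p = (of_int i :: rat)"
  shows "p = of_int (i div N) + of_int (i mod N) / of_int N"
proof -
  have "p = of_int i / of_int N" using h N by (simp add: field_simps)
  also have "(of_int i :: rat) = of_int N * of_int (i div N) + of_int (i mod N)"
    by (metis div_mult_mod_eq of_int_add of_int_mult mult.commute)
  finally show ?thesis using N by (simp add: field_simps)
qed

lemma fg: "\<exists>S. finite S \<and> S \<subseteq> Ordr \<and> Ordr = {\<Sum>s\<in>S. of_int (cf s) * s | cf. True}"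
proof -
  obtain N where N: "N > 0" and bd: "\<And>p q. emb p q \<in> Ordr \<Longrightarrow> dn N p \<and> dn N q"
    using den_bound by blast
  define f where "f = (\<lambda>(j1::int, j2::int, j3::int, j4::int). emb (of_int j1 / of_int N, of_int j2 / of_int N) (of_int j3 / of_int N, of_int j4 / of_int N))"
  define Bx where "Bx = f ` ({0..<N} \<times> {0..<N} \<times> {0..<N} \<times> {0..<N}) \<inter> Ordr"
  define S where "S = {1, e2, \<alpha>, e4} \<union> Bx"
  have finS: "finite S" unfolding S_def Bx_def by simp
  have SO: "S \<subseteq> Ordr" unfolding S_def Bx_def using e_Ordr by auto
  have "Ordr = {\<Sum>s\<in>S. of_int (cf s) * s | cf. True}"
  proof
    show "{\<Sum>s\<in>S. of_int (cf s) * s | cf. True} \<subseteq> Ordr"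
    proof
      fix x assume "x \<in> {\<Sum>s\<in>S. of_int (cf s) * s | cf. True}"
      then obtain cf where x: "x = (\<Sum>s\<in>S. of_int (cf s) * s)" by blast
      have "of_int (cf s) * s \<in> Ordr" if "s \<in> S" for s
        using Ordr_mul[OF Ordr_int] SO that by blast
      thus "x \<in> Ordr" unfolding x by (rule Ordr_sum[OF finS])
    qed
  next
    show "Ordr \<subseteq> {\<Sum>s\<in>S. of_int (cf s) * s | cf. True}"
    proof
      fix g assume g: "g \<in> Ordr"
      then obtain p1 p2 q1 q2 where gd: "g = emb (p1,p2) (q1,q2)" using Ordr_LL inLL by (metis prod.collapse subsetD)
      have "dn N (p1,p2)" "dn N (q1,q2)" using bd g gd by auto
      then obtain i1 i2 i3 i4 where i: "of_int N * p1 = of_int i1" "of_int N * p2 = of_int i2"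
         "of_int N * q1 = of_int i3" "of_int N * q2 = of_int i4"
        unfolding dn_def by (auto elim!: Ints_cases)
      note cs = coord_split[OF N i(1)] coord_split[OF N i(2)] coord_split[OF N i(3)] coord_split[OF N i(4)]
      define g' where "g' = f (i1 mod N, i2 mod N, i3 mod N, i4 mod N)"
      define ek where "ek = emb (of_int (i1 div N), of_int (i2 div N)) (of_int (i3 div N), of_int (i4 div N))"
      have gsplit: "g = g' + ek"
        unfolding g'_def ek_def f_def gd using cs by (simp add: emb_add kadd_def add.commute)
      have ekO: "ek \<in> Ordr" unfolding ek_def by (rule emb_int_Ordr)
      have "g' = g + - ek" using gsplit by simp
      moreover have "g + - ek \<in> Ordr" using Ordr_add[OF g Ordr_neg[OF ekO]] .
      ultimately have g'O: "g' \<in> Ordr" by simp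
      have "(i1 mod N, i2 mod N, i3 mod N, i4 mod N) \<in> {0..<N} \<times> {0..<N} \<times> {0..<N} \<times> {0..<N}"
        using N by simp
      hence g'B: "g' \<in> Bx" unfolding Bx_def g'_def using g'O g'_def by auto
      define cf where "cf = (\<lambda>s. (if s = g' then 1 else 0) + (if s = 1 then i1 div N else 0)
         + (if s = e2 then i2 div N else 0) + (if s = \<alpha> then i3 div N else 0) + (if s = e4 then i4 div N else 0))"
      have cfe: "\<And>s. of_int (cf s) * s = (if s = g' then of_int 1 * s else 0) + (if s = 1 then of_int (i1 div N) * s else 0)
         + (if s = e2 then of_int (i2 div N) * s else 0) + (if s = \<alpha> then of_int (i3 div N) * s else 0)
         + (if s = e4 then of_int (i4 div N) * s else 0)"
        unfolding cf_def by (simp add: distrib_right)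
      have mem: "g' \<in> S" "1 \<in> S" "e2 \<in> S" "\<alpha> \<in> S" "e4 \<in> S" unfolding S_def using g'B by auto
      have "(\<Sum>s\<in>S. of_int (cf s) * s) = (\<Sum>s\<in>S. (if s = g' then of_int 1 * s else 0) + (if s = 1 then of_int (i1 div N) * s else 0)
         + (if s = e2 then of_int (i2 div N) * s else 0) + (if s = \<alpha> then of_int (i3 div N) * s else 0)
         + (if s = e4 then of_int (i4 div N) * s else 0))"
        by (rule sum.cong[OF refl]) (rule cfe)
      also have "\<dots> = of_int 1 * g' + of_int (i1 div N) * 1 + of_int (i2 div N) * e2
           + of_int (i3 div N) * \<alpha> + of_int (i4 div N) * e4"
        unfolding sum.distrib sum_delta_c[OF finS mem(1)] sum_delta_c[OF finS mem(2)] sum_delta_c[OF finS mem(3)]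
          sum_delta_c[OF finS mem(4)] sum_delta_c[OF finS mem(5)] ..
      also have "\<dots> = g" unfolding gsplit ek_def emb_int by (simp add: algebra_simps)
      finally show "g \<in> {\<Sum>s\<in>S. of_int (cf s) * s | cf. True}" by (metis (mono_tags, lifting) mem_Collect_eq)
    qed
  qed
  thus ?thesis using finS SO by blast
qed

end


context qd2 begin

abbreviation "jj \<equiv> (\<lambda>x. complex_of_real (sigp D x))"

lemma LL_closed: "x \<in> LL \<Longrightarrow> y \<in> LL \<Longrightarrow> x + y \<in> LL \<and> x * y \<in> LL \<and> - x \<in> LL \<and> inverse x \<in> LL"
  using LL_sub unfolding subfield_C_def by blast

lemma alpha_LL: "\<alpha> \<in> LL" using emb_LL[of kzero kone] emb_alpha by simp
lemma one_LL: "1 \<in> LL" using LL_sub unfolding subfield_C_def by blast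

lemma tot_im: "totally_imaginary LL"
  unfolding totally_imaginary_def
proof (intro allI impI)
  fix f :: "complex \<Rightarrow> complex"
  assume f: "f 1 = 1 \<and> (\<forall>x \<in> LL. \<forall>y \<in> LL. f (x + y) = f x + f y \<and> f (x * y) = f x * f y)"
  show "\<exists>x \<in> LL. f x \<notin> \<real>"
  proof (rule ccontr)
    assume "\<not> (\<exists>x \<in> LL. f x \<notin> \<real>)"
    hence fr: "f \<alpha> \<in> \<real>" using alpha_LL by blast
    have pw: "\<alpha> ^ k \<in> LL \<and> f (\<alpha> ^ k) = f \<alpha> ^ k" for k
    proof (induction k)
      case 0 thus ?case using f one_LL by simp
    next
      case (Suc k) thus ?case using f alpha_LL LL_closed by simp
    qed
    have "f \<alpha> ^ n = 1" using pw[of n] pow_n f by simp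
    hence nrm: "norm (f \<alpha>) = 1" using norm_root1 n0 by blast
    from fr obtain r where r: "f \<alpha> = of_real r" by (auto elim: Reals_cases)
    have "\<bar>r\<bar> = 1" using nrm r by simp
    hence "r * r = 1" by (metis abs_mult_self_eq mult_1)
    hence fa2: "f (\<alpha> ^ 2) = 1" using pw[of 2] r by (simp add: power2_eq_square flip: of_real_mult)
    have m1: "-1 \<in> LL" using LL_closed one_LL by blast
    have z: "0 \<in> LL" using LL_sub unfolding subfield_C_def by blast
    have "f (0 + 0) = f 0 + f 0" using f z by blast
    hence f0: "f 0 = 0" by simp
    have "f (1 + -1) = f 1 + f (-1)" using f one_LL m1 by blast
    hence fm1: "f (-1) = -1" using f0 f by (simp add: eq_neg_iff_add_eq_0 add.commute)
    define y where "y = \<alpha> ^ 2 + -1"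
    have yL: "y \<in> LL" unfolding y_def using pw LL_closed m1 by blast
    have ynz: "y \<noteq> 0" unfolding y_def using alpha_sq_ne1 by simp
    have "f y = f (\<alpha> ^ 2) + f (-1)" unfolding y_def using f pw m1 by blast
    hence fy: "f y = 0" using fa2 fm1 by simp
    have iL: "inverse y \<in> LL" using LL_closed yL by blast
    have "f (y * inverse y) = f y * f (inverse y)" using f yL iL by blast
    thus False using ynz fy f by simp
  qed
qed

lemma jj_LL: "jj x \<in> LL" using emb_LL[of x kzero] emb_real by simp

lemma CMext: "CM_ext D LL jj"
  unfolding CM_ext_def
proof (intro conjI)
  show "subfield_C LL" by (rule LL_sub)
  show "kd_embedding D LL jj" unfolding kd_embedding_def
  proof (intro conjI allI)
    fix x y
    show "jj x \<in> LL" by (rule jj_LL)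
    show "jj (kadd x y) = jj x + jj y" by simp
    show "jj (kmul D x y) = jj x * jj y" by simp
  next
    show "jj kone = 1" by simp
  qed
  show "totally_imaginary LL" by (rule tot_im)
  have nr: "\<alpha> \<notin> range jj"
  proof
    assume "\<alpha> \<in> range jj"
    then obtain x where "\<alpha> = jj x" by blast
    hence "Im \<alpha> = 0" by simp
    thus False using Im_alpha by simp
  qed
  have "LL = {jj a + jj b * \<alpha> | a b. True}" unfolding LL_def ..
  thus "\<exists>w \<in> LL. w \<notin> range jj \<and> LL = {jj a + jj b * w | a b. True}"
    using nr alpha_LL by blast
qed

lemma ordin: "order_in LL Ordr"
  unfolding order_in_def
proof (intro conjI ballI)
  show "Ordr \<subseteq> LL" by (rule Ordr_LL)
  show "1 \<in> Ordr" by (rule Ordr_one)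
  fix x y assume "x \<in> Ordr" "y \<in> Ordr"
  thus "x + y \<in> Ordr" "x * y \<in> Ordr" "- x \<in> Ordr" by (simp_all add: Ordr_add Ordr_mul Ordr_neg)
next
  show "\<exists>S. finite S \<and> S \<subseteq> Ordr \<and> Ordr = {\<Sum>s\<in>S. of_int (c s) * s | c. True}" by (rule fg)
  fix x assume "x \<in> LL" thus "\<exists>m::int. m > 0 \<and> of_int m * x \<in> Ordr" by (rule span_LL)
qed

lemma rho_int: "rho (of_int m) = diag (of_int m) (of_int m)"
proof -
  have "rho (of_real (sp (of_int m, 0))) = iota D \<tau> (of_int m, 0)" by (rule rho_real)
  thus ?thesis by (simp add: iota_eq)
qed

lemma int_LL: "(of_int m :: complex) \<in> LL"
  using emb_LL[of "(of_int m, 0)" kzero] emb_real by simp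

lemma CMhom: "CM_hom D \<tau> LL Ordr rho"
  unfolding CM_hom_def
proof (intro conjI ballI allI impI)
  show "rho 1 = mat 1" by (rule rho_one)
  fix x assume x: "x \<in> Ordr"
  show "is_end D \<tau> (rho x)" using x unfolding Ordr_def by simp
  fix y assume y: "y \<in> Ordr"
  show "rho (x + y) = rho x + rho y" "rho (x * y) = rho x ** rho y"
    using rho_add rho_mul x y Ordr_LL by (simp_all add: subset_iff)
next
  fix x and m :: int
  assume x: "x \<in> LL" and m: "m > 0" and mx: "of_int m * x \<in> Ordr"
    and e: "is_end D \<tau> ((1 / real_of_int m) *\<^sub>R rho (of_int m * x))"
  obtain p q where xd: "x = emb p q" using x inLL by blast
  have "rho (of_int m * x) = diag (of_int m) (of_int m) ** rho x" using rho_mul[OF int_LL x] rho_int by simp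
  hence r: "rho (of_int m * x) = diag (of_int m * emb p q) (of_int m * emb2 p q)"
    unfolding xd rho_emb by (simp add: diag_mult)
  have sc: "(1 / real_of_int m) *\<^sub>R (of_int m * z) = z" for z :: complex
    using m by (simp add: scaleR_conv_of_real)
  have "(1 / real_of_int m) *\<^sub>R rho (of_int m * x) = rho x"
    unfolding r diag_scaleR sc unfolding xd rho_emb ..
  thus "x \<in> Ordr" using e x unfolding Ordr_def by simp
next
  fix a assume a: "a \<in> Ordr"
  obtain p q where ad: "a = emb p q" using a Ordr_LL inLL by blast
  show "cnj a \<in> Ordr" using Ordr_cnj(1) a ad by blast
  fix u v u' v'
  assume "u \<in> LambdaD D" "v \<in> LambdaD D" "u' \<in> LambdaD D" "v' \<in> LambdaD D"
    "rho a *v phi D \<tau> u = phi D \<tau> u'" "rho (cnj a) *v phi D \<tau> v = phi D \<tau> v'"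
  thus "symp D u' v = symp D u v'" using rosati[OF a] by blast
qed

lemma CMextends: "CM_extends D \<tau> n"
proof -
  have "\<forall>x \<in> OD D. jj x \<in> Ordr \<and> rho (jj x) = iota D \<tau> x"
    using Ordr_real rho_real by blast
  thus ?thesis unfolding CM_extends_def using CMext ordin CMhom Ordr_alpha prim by blast
qed

end

context qd begin

lemma two_three:
  assumes n: "n > 2" and M: "ppav_aut D \<tau> M" "cmat_order M n" "\<forall>x \<in> OD D. M ** iota D \<tau> x = iota D \<tau> x ** M"
  shows "CM_extends D \<tau> n"
proof -
  obtain A where A: "A \<in> SL_Lambda D" and E: "eqs (M$1$1) (M$2$2) A" and Md: "M = diag (M$1$1) (M$2$2)"
    using two_core[OF M(1,3)] by blast
  obtain a b c d where Ad: "A = (a,b,c,d)" by (cases A) auto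
  interpret q2: qd2 D \<tau> n "M$1$1" "M$2$2" a b c d
    by (unfold_locales) (use n A E M(2) Md Ad in auto)
  show ?thesis by (rule q2.CMextends)
qed

end

context qd begin

lemma three_two:
  assumes n: "n > 2" and CM: "CM_extends D \<tau> n"
  shows "\<exists>M. ppav_aut D \<tau> M \<and> cmat_order M n \<and> (\<forall>x \<in> OD D. M ** iota D \<tau> x = iota D \<tau> x ** M)"
proof -
  obtain L j Ord \<rho> \<zeta> where ext: "CM_ext D L j" and ord: "order_in L Ord" and hom: "CM_hom D \<tau> L Ord \<rho>"
    and jO: "\<forall>x \<in> OD D. j x \<in> Ord \<and> \<rho> (j x) = iota D \<tau> x" and z: "\<zeta> \<in> Ord" and pr: "primitive_root n \<zeta>"
    using CM unfolding CM_extends_def by blast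
  have OL: "Ord \<subseteq> L" and one: "1 \<in> Ord"
    and cl: "\<And>x y. x \<in> Ord \<Longrightarrow> y \<in> Ord \<Longrightarrow> x + y \<in> Ord \<and> x * y \<in> Ord \<and> - x \<in> Ord"
    and span: "\<forall>x \<in> L. \<exists>m::int. m > 0 \<and> of_int m * x \<in> Ord"
    using ord unfolding order_in_def by blast+
  have r1: "\<rho> 1 = mat 1" and rend: "\<And>x. x \<in> Ord \<Longrightarrow> is_end D \<tau> (\<rho> x)"
    and radd: "\<And>x y. x \<in> Ord \<Longrightarrow> y \<in> Ord \<Longrightarrow> \<rho> (x + y) = \<rho> x + \<rho> y"
    and rmul: "\<And>x y. x \<in> Ord \<Longrightarrow> y \<in> Ord \<Longrightarrow> \<rho> (x * y) = \<rho> x ** \<rho> y"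
    and ros: "\<forall>a \<in> Ord. cnj a \<in> Ord \<and>
        (\<forall>u \<in> LambdaD D. \<forall>v \<in> LambdaD D. \<forall>u' \<in> LambdaD D. \<forall>v' \<in> LambdaD D.
           \<rho> a *v phi D \<tau> u = phi D \<tau> u' \<longrightarrow> \<rho> (cnj a) *v phi D \<tau> v = phi D \<tau> v' \<longrightarrow>
           symp D u' v = symp D u v')"
    using hom unfolding CM_hom_def by blast+
  have sub: "subfield_C L" using ext unfolding CM_ext_def by blast
  have inv: "\<And>x. x \<in> L \<Longrightarrow> inverse x \<in> L" using sub unfolding subfield_C_def by blast
  have m1: "-1 \<in> Ord" using cl one by blast
  have zero: "0 \<in> Ord" using cl[OF one m1] by simp
  have r0: "\<rho> 0 = 0"
  proof -
    have "\<rho> (0 + 0) = \<rho> 0 + \<rho> 0" using radd zero by blast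
    thus ?thesis by simp
  qed
  have rm1: "\<rho> (-1) = - mat 1"
  proof -
    have "\<rho> (1 + -1) = \<rho> 1 + \<rho> (-1)" using radd one m1 by blast
    thus ?thesis using r0 r1 by (simp add: eq_neg_iff_add_eq_0 add.commute)
  qed
  have pow: "\<zeta> ^ k \<in> Ord \<and> \<rho> (\<zeta> ^ k) = cmat_pow (\<rho> \<zeta>) k" for k
  proof (induction k)
    case 0 thus ?case using one r1 by simp
  next
    case (Suc k)
    thus ?case using cl[OF z] rmul[OF z] by simp
  qed
  have nat: "of_nat k \<in> Ord \<and> \<rho> (of_nat k) $ 1 $ 1 = of_nat k" for k
  proof (induction k)
    case 0 thus ?case using zero r0 by simp
  next
    case (Suc k)
    have "of_nat (Suc k) = 1 + (of_nat k :: complex)" by simp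
    moreover have "\<rho> (1 + of_nat k) = mat 1 + \<rho> (of_nat k)" using radd[OF one] Suc r1 by simp
    ultimately show ?case using Suc cl[OF one] by (simp add: mat_def)
  qed
  have n0: "n > 0" using n by simp
  have zn: "\<zeta> ^ n = 1" using pr unfolding primitive_root_def by blast
  let ?M = "\<rho> \<zeta>"
  have endM: "is_end D \<tau> ?M" using rend z by blast
  have Mn: "cmat_pow ?M n = mat 1" using pow[of n] zn r1 by simp
  have ord: "cmat_order ?M n"
    unfolding cmat_order_def
  proof (intro conjI allI impI)
    show "n > 0" by (rule n0)
    show "cmat_pow ?M n = mat 1" by (rule Mn)
    fix k assume k: "0 < k \<and> k < n"
    show "cmat_pow ?M k \<noteq> mat 1"
    proof
      assume h: "cmat_pow ?M k = mat 1"
      define x where "x = \<zeta> ^ k + -1"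
      have xO: "x \<in> Ord" unfolding x_def using cl pow m1 by blast
      have "\<zeta> ^ k \<noteq> 1" using pr k unfolding primitive_root_def by blast
      hence xnz: "x \<noteq> 0" unfolding x_def by simp
      have "\<rho> x = \<rho> (\<zeta> ^ k) + \<rho> (-1)" unfolding x_def using radd pow m1 by blast
      hence rx: "\<rho> x = 0" using pow h rm1 by simp
      obtain m :: int where m: "m > 0" "of_int m * inverse x \<in> Ord" using span inv OL xO by blast
      have "x * (of_int m * inverse x) = of_int m" using xnz by simp
      hence "\<rho> (of_int m) = \<rho> x ** \<rho> (of_int m * inverse x)" using rmul[OF xO m(2)] by metis
      hence "\<rho> (of_int m) = 0" using rx by simp
      moreover have "(of_int m :: complex) = of_nat (nat m)" using m by simp
      ultimately have "(of_nat (nat m) :: complex) = 0" using nat[of "nat m"] by simp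
      thus False using m by simp
    qed
  qed
  have ccz: "cnj \<zeta> * \<zeta> = 1" by (rule cnj_mult_root1[OF zn n0])
  have cz: "cnj \<zeta> \<in> Ord" using ros z by blast
  have "\<rho> (cnj \<zeta>) ** \<rho> \<zeta> = mat 1" using rmul[OF cz z] ccz r1 by simp
  have symp: "symp D u' v' = symp D u v"
    if "u \<in> LambdaD D" "v \<in> LambdaD D" "u' \<in> LambdaD D" "v' \<in> LambdaD D"
       "?M *v phi D \<tau> u = phi D \<tau> u'" "?M *v phi D \<tau> v = phi D \<tau> v'" for u v u' v'
  proof -
    have "\<rho> (cnj \<zeta>) *v phi D \<tau> v' = \<rho> (cnj \<zeta>) *v (\<rho> \<zeta> *v phi D \<tau> v)"
      using that(6) by simp
    also have "\<dots> = (\<rho> (cnj \<zeta>) ** \<rho> \<zeta>) *v phi D \<tau> v" by (rule matrix_vector_mul_assoc)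
    also have "\<dots> = phi D \<tau> v" using \<open>\<rho> (cnj \<zeta>) ** \<rho> \<zeta> = mat 1\<close> by simp
    finally have "\<rho> (cnj \<zeta>) *v phi D \<tau> v' = phi D \<tau> v" .
    have R: "\<forall>u \<in> LambdaD D. \<forall>v \<in> LambdaD D. \<forall>u' \<in> LambdaD D. \<forall>v' \<in> LambdaD D.
           \<rho> \<zeta> *v phi D \<tau> u = phi D \<tau> u' \<longrightarrow> \<rho> (cnj \<zeta>) *v phi D \<tau> v = phi D \<tau> v' \<longrightarrow>
           symp D u' v = symp D u v'" using ros z by blast
    show ?thesis using R[rule_format, OF that(1) that(4) that(3) that(2) that(5) \<open>\<rho> (cnj \<zeta>) *v phi D \<tau> v' = phi D \<tau> v\<close>] by simp
  qed
  have zn1: "\<zeta> ^ (n - 1) \<in> Ord" using pow by blast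
  have "\<zeta> * \<zeta> ^ (n - 1) = 1" "\<zeta> ^ (n - 1) * \<zeta> = 1" using zn n0
    by (cases n; simp add: mult.commute)+
  hence inv1: "?M ** \<rho> (\<zeta> ^ (n - 1)) = mat 1" "\<rho> (\<zeta> ^ (n - 1)) ** ?M = mat 1"
    using rmul[OF z zn1] rmul[OF zn1 z] r1 by simp_all
  have "ppav_aut D \<tau> ?M" unfolding ppav_aut_def using endM rend[OF zn1] inv1 symp by blast
  moreover have "\<forall>x \<in> OD D. ?M ** iota D \<tau> x = iota D \<tau> x ** ?M"
  proof
    fix x assume x: "x \<in> OD D"
    have jx: "j x \<in> Ord" "\<rho> (j x) = iota D \<tau> x" using jO x by auto
    have "?M ** iota D \<tau> x = \<rho> (\<zeta> * j x)" using rmul[OF z jx(1)] jx(2) by simp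
    also have "\<dots> = \<rho> (j x * \<zeta>)" by (simp add: mult.commute)
    also have "\<dots> = iota D \<tau> x ** ?M" using rmul[OF jx(1) z] jx(2) by simp
    finally show "?M ** iota D \<tau> x = iota D \<tau> x ** ?M" .
  qed
  ultimately show ?thesis using ord by blast
qed

end

theorem proposition3p3:
  fixes D :: int and \<tau> :: "complex \<times> complex" and n :: nat
  assumes "real_quadratic_disc D"
    and "Im (fst \<tau>) > 0" and "Im (snd \<tau>) > 0"
    and "n > 2"
  shows "((\<exists>A \<in> SL_Lambda D. kmat_order D A n \<and> sl_act D A \<tau> = \<tau>) \<longleftrightarrow>
           (\<exists>M. ppav_aut D \<tau> M \<and> cmat_order M n \<and>
                (\<forall>x \<in> OD D. M ** iota D \<tau> x = iota D \<tau> x ** M)))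
       \<and> ((\<exists>M. ppav_aut D \<tau> M \<and> cmat_order M n \<and>
                (\<forall>x \<in> OD D. M ** iota D \<tau> x = iota D \<tau> x ** M)) \<longleftrightarrow>
           CM_extends D \<tau> n)"
proof -
  interpret qd D \<tau> by (unfold_locales) (use assms in auto)
  show ?thesis using one_two two_one two_three three_two assms(4) by blast
qed

end
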